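(* Let $\mathcal X\subseteq\mathcal G$ be a class of objects. Let $\mathrm{Filt}(\mathcal X)$ be the class of all $M\in\mathcal G$ admitting a chain $0=M_0\subseteq M_1\subseteq\cdots\subseteq M_k=M$ in which every $M_i$ is a strict subobject of $M$ and every quotient $M_i/M_{i-1}$ ($1\le i\le k$) is a strict quotient of some object of $\mathcal X$. Then $\mathrm{Filt}(\mathcal X)$ is a pseudo-torsion class, and it is contained in every pseudo-torsion class that contains $\mathcal X$; i.e. it is the smallest pseudo-torsion class containing $\mathcal X$.
   Context: Let $\Lambda$ be a finite dimensional algebra over a field and $\mathrm{mod}\text-\Lambda$ the category of finitely generated right $\Lambda$-modules. Fix a torsion class $\mathcal G\subseteq\mathrm{mod}\text-\Lambda$, i.e. a class of modules closed under isomorphisms, extensions and quotients. For $B\in\mathcal G$, a subobject of $B$ is a submodule of $B$ that lies in $\mathcal G$. A subobject $A\subseteq B$ is a strict subobject if $A\cap B'\in\mathcal G$ for every subobject $B'$ of $B$. A strict quotient of $B$ is $B/A$ with $A$ a strict subobject. A short exact sequence $0\to A\to B\to C\to0$ with $A,B,C\in\mathcal G$ is strict exact (and $B$ a strict extension of $A$ by $C$) if the image of $A$ is a strict subobject of $B$. A pseudo-torsion class is a nonempty class $\mathcal P\subseteq\mathcal G$ closed under strict quotients (if $A\in\mathcal P$ then every strict quotient of $A$ is in $\mathcal P$) and strict extensions (if $0\to A\to B\to C\to0$ is strict exact with $A,C\in\mathcal P$ then $B\in\mathcal P$). *)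

theory Defs
  imports Main
begin

text \<open>The algebra Lambda is a type 'r of class ring_1; the ground field is a type 'k of
class field; alg is the structure map k -> Lambda (a unital ring homomorphism into the
centre), and Lambda is finite dimensional: spanned over k by a finite set.\<close>

definition fin_dim_algebra :: "('k::field \<Rightarrow> 'r::ring_1) \<Rightarrow> bool" where
  "fin_dim_algebra alg \<longleftrightarrow>
     alg 1 = 1 \<and>
     (\<forall>a b. alg (a + b) = alg a + alg b) \<and>
     (\<forall>a b. alg (a * b) = alg a * alg b) \<and>
     (\<forall>a x. alg a * x = x * alg a) \<and>
     (\<exists>F. finite F \<and> (\<forall>x. \<exists>c. x = (\<Sum>b\<in>F. alg (c b) * b)))"

record ('r, 'm) rmod =
  mcarrier :: "'m set"
  madd :: "'m \<Rightarrow> 'm \<Rightarrow> 'm"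
  mzero :: 'm
  msmult :: "'m \<Rightarrow> 'r \<Rightarrow> 'm"

definition rmodule :: "('r::ring_1, 'm) rmod \<Rightarrow> bool" where
  "rmodule M \<longleftrightarrow>
     mzero M \<in> mcarrier M \<and>
     (\<forall>x\<in>mcarrier M. \<forall>y\<in>mcarrier M. madd M x y \<in> mcarrier M) \<and>
     (\<forall>x\<in>mcarrier M. \<forall>r. msmult M x r \<in> mcarrier M) \<and>
     (\<forall>x\<in>mcarrier M. \<forall>y\<in>mcarrier M. \<forall>z\<in>mcarrier M.
         madd M (madd M x y) z = madd M x (madd M y z)) \<and>
     (\<forall>x\<in>mcarrier M. \<forall>y\<in>mcarrier M. madd M x y = madd M y x) \<and>
     (\<forall>x\<in>mcarrier M. madd M (mzero M) x = x) \<and>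
     (\<forall>x\<in>mcarrier M. \<exists>y\<in>mcarrier M. madd M x y = mzero M) \<and>
     (\<forall>x\<in>mcarrier M. \<forall>y\<in>mcarrier M. \<forall>r.
         msmult M (madd M x y) r = madd M (msmult M x r) (msmult M y r)) \<and>
     (\<forall>x\<in>mcarrier M. \<forall>r s. msmult M x (r + s) = madd M (msmult M x r) (msmult M x s)) \<and>
     (\<forall>x\<in>mcarrier M. \<forall>r s. msmult M x (r * s) = msmult M (msmult M x r) s) \<and>
     (\<forall>x\<in>mcarrier M. msmult M x 1 = x)"

definition submodule :: "('r::ring_1, 'm) rmod \<Rightarrow> 'm set \<Rightarrow> bool" where
  "submodule M N \<longleftrightarrow>
     N \<subseteq> mcarrier M \<and> mzero M \<in> N \<and>
     (\<forall>x\<in>N. \<forall>y\<in>N. madd M x y \<in> N) \<and>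
     (\<forall>x\<in>N. \<forall>r. msmult M x r \<in> N)"

definition sub :: "('r, 'm) rmod \<Rightarrow> 'm set \<Rightarrow> ('r, 'm) rmod" where
  "sub M N = M\<lparr>mcarrier := N\<rparr>"

definition fin_gen :: "('r::ring_1, 'm) rmod \<Rightarrow> bool" where
  "fin_gen M \<longleftrightarrow> (\<exists>S. finite S \<and> S \<subseteq> mcarrier M \<and>
      (\<forall>N. submodule M N \<and> S \<subseteq> N \<longrightarrow> mcarrier M \<subseteq> N))"

definition fg_module :: "('r::ring_1, 'm) rmod \<Rightarrow> bool" where
  "fg_module M \<longleftrightarrow> rmodule M \<and> fin_gen M"

definition coset :: "('r, 'm) rmod \<Rightarrow> 'm set \<Rightarrow> 'm \<Rightarrow> 'm set" where
  "coset M N x = {madd M x n | n. n \<in> N}"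

definition quot :: "('r, 'm) rmod \<Rightarrow> 'm set \<Rightarrow> ('r, 'm set) rmod" where
  "quot M N = \<lparr> mcarrier = coset M N ` mcarrier M,
                madd = (\<lambda>X Y. {madd M x y | x y. x \<in> X \<and> y \<in> Y}),
                mzero = N,
                msmult = (\<lambda>X r. coset M N (msmult M (SOME x. x \<in> X) r)) \<rparr>"

definition mhom :: "('r, 'a) rmod \<Rightarrow> ('r, 'b) rmod \<Rightarrow> ('a \<Rightarrow> 'b) \<Rightarrow> bool" where
  "mhom M M' f \<longleftrightarrow>
     (\<forall>x\<in>mcarrier M. f x \<in> mcarrier M') \<and>
     (\<forall>x\<in>mcarrier M. \<forall>y\<in>mcarrier M. f (madd M x y) = madd M' (f x) (f y)) \<and>
     (\<forall>x\<in>mcarrier M. \<forall>r. f (msmult M x r) = msmult M' (f x) r)"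

definition miso :: "('r, 'a) rmod \<Rightarrow> ('r, 'b) rmod \<Rightarrow> bool" where
  "miso M M' \<longleftrightarrow> (\<exists>f. mhom M M' f \<and> bij_betw f (mcarrier M) (mcarrier M'))"

definition mkernel :: "('r, 'a) rmod \<Rightarrow> ('r, 'b) rmod \<Rightarrow> ('a \<Rightarrow> 'b) \<Rightarrow> 'a set" where
  "mkernel M M' f = {x \<in> mcarrier M. f x = mzero M'}"

definition short_exact ::
  "('r::ring_1, 'm) rmod \<Rightarrow> ('r, 'm) rmod \<Rightarrow> ('r, 'm) rmod \<Rightarrow> ('m \<Rightarrow> 'm) \<Rightarrow> ('m \<Rightarrow> 'm) \<Rightarrow> bool" where
  "short_exact A B C f g \<longleftrightarrow>
     rmodule A \<and> rmodule B \<and> rmodule C \<and> mhom A B f \<and> mhom B C g \<and>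
     inj_on f (mcarrier A) \<and> g ` mcarrier B = mcarrier C \<and>
     f ` mcarrier A = mkernel B C g"

text \<open>A class of objects is a predicate on modules whose carrier lives in a fixed
universe type 'm.  A module Q of any type lies in the class P (up to isomorphism)
if it is isomorphic to a member of P.\<close>

definition in_class :: "(('r, 'm) rmod \<Rightarrow> bool) \<Rightarrow> ('r, 'a) rmod \<Rightarrow> bool" where
  "in_class P Q \<longleftrightarrow> (\<exists>C. P C \<and> miso C Q)"

definition torsion_class :: "(('r::ring_1, 'm) rmod \<Rightarrow> bool) \<Rightarrow> bool" where
  "torsion_class G \<longleftrightarrow>
     (\<forall>M. G M \<longrightarrow> fg_module M) \<and>
     (\<exists>M. G M) \<and>
     (\<forall>B C. G B \<and> miso B C \<longrightarrow> G C) \<and>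
     (\<forall>A B C f g. G A \<and> G C \<and> short_exact A B C f g \<longrightarrow> G B) \<and>
     (\<forall>B N. G B \<and> submodule B N \<longrightarrow> in_class G (quot B N))"

definition subobject :: "(('r::ring_1, 'm) rmod \<Rightarrow> bool) \<Rightarrow> ('r, 'm) rmod \<Rightarrow> 'm set \<Rightarrow> bool" where
  "subobject G B A \<longleftrightarrow> submodule B A \<and> G (sub B A)"

definition strict_subobject ::
  "(('r::ring_1, 'm) rmod \<Rightarrow> bool) \<Rightarrow> ('r, 'm) rmod \<Rightarrow> 'm set \<Rightarrow> bool" where
  "strict_subobject G B A \<longleftrightarrow> subobject G B A \<and>
     (\<forall>B'. subobject G B B' \<longrightarrow> G (sub B (A \<inter> B')))"

definition strict_exact ::
  "(('r::ring_1, 'm) rmod \<Rightarrow> bool) \<Rightarrow>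
   ('r, 'm) rmod \<Rightarrow> ('r, 'm) rmod \<Rightarrow> ('r, 'm) rmod \<Rightarrow> ('m \<Rightarrow> 'm) \<Rightarrow> ('m \<Rightarrow> 'm) \<Rightarrow> bool" where
  "strict_exact G A B C f g \<longleftrightarrow>
     G A \<and> G B \<and> G C \<and> short_exact A B C f g \<and> strict_subobject G B (f ` mcarrier A)"

definition pseudo_torsion_class ::
  "(('r::ring_1, 'm) rmod \<Rightarrow> bool) \<Rightarrow> (('r, 'm) rmod \<Rightarrow> bool) \<Rightarrow> bool" where
  "pseudo_torsion_class G P \<longleftrightarrow>
     (\<forall>M. P M \<longrightarrow> G M) \<and>
     (\<exists>M. P M) \<and>
     (\<forall>A S. P A \<and> strict_subobject G A S \<longrightarrow> in_class P (quot A S)) \<and>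
     (\<forall>A B C f g. P A \<and> P C \<and> strict_exact G A B C f g \<longrightarrow> P B)"

definition Filt :: "(('r::ring_1, 'm) rmod \<Rightarrow> bool) \<Rightarrow> (('r, 'm) rmod \<Rightarrow> bool) \<Rightarrow> ('r, 'm) rmod \<Rightarrow> bool" where
  "Filt G X M \<longleftrightarrow> G M \<and>
     (\<exists>k Ms. Ms 0 = {mzero M} \<and> Ms k = mcarrier M \<and>
        (\<forall>i\<le>k. strict_subobject G M (Ms i)) \<and>
        (\<forall>i<k. Ms i \<subseteq> Ms (Suc i)) \<and>
        (\<forall>i<k. \<exists>Y S. X Y \<and> strict_subobject G Y S \<and>
                 miso (quot (sub M (Ms (Suc i))) (Ms i)) (quot Y S)))"

end

theory Submission
  imports Defs
begin
lemma rm_zero: "rmodule M \<Longrightarrow> mzero M \<in> mcarrier M" by (simp add: rmodule_def)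
lemma rm_add: "rmodule M \<Longrightarrow> x \<in> mcarrier M \<Longrightarrow> y \<in> mcarrier M \<Longrightarrow> madd M x y \<in> mcarrier M"
  by (simp add: rmodule_def)
lemma rm_smult: "rmodule M \<Longrightarrow> x \<in> mcarrier M \<Longrightarrow> msmult M x r \<in> mcarrier M"
  by (simp add: rmodule_def)
lemma rm_assoc: "rmodule M \<Longrightarrow> x \<in> mcarrier M \<Longrightarrow> y \<in> mcarrier M \<Longrightarrow> z \<in> mcarrier M \<Longrightarrow>
   madd M (madd M x y) z = madd M x (madd M y z)"
  unfolding rmodule_def by blast
lemma rm_comm: "rmodule M \<Longrightarrow> x \<in> mcarrier M \<Longrightarrow> y \<in> mcarrier M \<Longrightarrow> madd M x y = madd M y x"
  unfolding rmodule_def by blast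
lemma rm_lzero: "rmodule M \<Longrightarrow> x \<in> mcarrier M \<Longrightarrow> madd M (mzero M) x = x"
  unfolding rmodule_def by blast
lemma rm_rzero: "rmodule M \<Longrightarrow> x \<in> mcarrier M \<Longrightarrow> madd M x (mzero M) = x"
  by (metis rm_comm rm_lzero rm_zero)
lemma rm_inv: "rmodule M \<Longrightarrow> x \<in> mcarrier M \<Longrightarrow> \<exists>y\<in>mcarrier M. madd M x y = mzero M"
  unfolding rmodule_def by (elim conjE) (rule bspec)
lemma rm_dl: "rmodule M \<Longrightarrow> x \<in> mcarrier M \<Longrightarrow> y \<in> mcarrier M \<Longrightarrow>
   msmult M (madd M x y) r = madd M (msmult M x r) (msmult M y r)"
  unfolding rmodule_def by blast
lemma rm_dr: "rmodule M \<Longrightarrow> x \<in> mcarrier M \<Longrightarrow> msmult M x (r + s) = madd M (msmult M x r) (msmult M x s)"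
  unfolding rmodule_def by blast
lemma rm_one: "rmodule M \<Longrightarrow> x \<in> mcarrier M \<Longrightarrow> msmult M x 1 = x"
  by (simp add: rmodule_def)

lemma rm_cancel:
  assumes M: "rmodule M" and x: "x \<in> mcarrier M" and a: "a \<in> mcarrier M" and b: "b \<in> mcarrier M"
    and e: "madd M x a = madd M x b"
  shows "a = b"
proof -
  obtain y where y: "y \<in> mcarrier M" "madd M x y = mzero M" using rm_inv[OF M x] by blast
  have yx: "madd M y x = mzero M" using y M x rm_comm by metis
  have "a = madd M (madd M y x) a" using yx rm_lzero[OF M a] by simp
  also have "\<dots> = madd M y (madd M x a)" using rm_assoc M y x a by metis
  also have "\<dots> = madd M y (madd M x b)" using e by simp
  also have "\<dots> = madd M (madd M y x) b" using rm_assoc M y x b by metis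
  also have "\<dots> = b" using yx rm_lzero[OF M b] by simp
  finally show ?thesis .
qed

lemma rm_idem: "rmodule M \<Longrightarrow> x \<in> mcarrier M \<Longrightarrow> madd M x x = x \<Longrightarrow> x = mzero M"
  by (metis rm_cancel rm_rzero rm_zero)

lemma rm_smult_0: "rmodule M \<Longrightarrow> x \<in> mcarrier M \<Longrightarrow> msmult M x 0 = mzero M"
  by (metis add_0 rm_dr rm_idem rm_smult)

lemma rm_zero_smult: "rmodule M \<Longrightarrow> msmult M (mzero M) r = mzero M"
  by (metis rm_dl rm_idem rm_smult rm_zero rm_lzero)

definition mneg :: "('r::ring_1, 'm) rmod \<Rightarrow> 'm \<Rightarrow> 'm" where
  "mneg M x = msmult M x (-1)"
definition msub :: "('r::ring_1, 'm) rmod \<Rightarrow> 'm \<Rightarrow> 'm \<Rightarrow> 'm" where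
  "msub M x y = madd M x (mneg M y)"

lemma rm_neg: "rmodule M \<Longrightarrow> x \<in> mcarrier M \<Longrightarrow> mneg M x \<in> mcarrier M"
  by (simp add: mneg_def rm_smult)
lemma rm_sub: "rmodule M \<Longrightarrow> x \<in> mcarrier M \<Longrightarrow> y \<in> mcarrier M \<Longrightarrow> msub M x y \<in> mcarrier M"
  by (simp add: msub_def rm_add rm_neg)

lemma rm_neg_r: "rmodule M \<Longrightarrow> x \<in> mcarrier M \<Longrightarrow> madd M x (mneg M x) = mzero M"
proof -
  assume M: "rmodule M" and x: "x \<in> mcarrier M"
  have "madd M x (mneg M x) = madd M (msmult M x 1) (msmult M x (-1))"
    using rm_one[OF M x] by (simp add: mneg_def)
  also have "\<dots> = msmult M x (1 + -1)" using rm_dr[OF M x, of 1 "-1"] by simp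
  also have "\<dots> = mzero M" using rm_smult_0[OF M x] by simp
  finally show ?thesis .
qed
lemma rm_neg_l: "rmodule M \<Longrightarrow> x \<in> mcarrier M \<Longrightarrow> madd M (mneg M x) x = mzero M"
  by (metis rm_comm rm_neg rm_neg_r)

lemma rm_sub_self: "rmodule M \<Longrightarrow> x \<in> mcarrier M \<Longrightarrow> msub M x x = mzero M"
  by (simp add: msub_def rm_neg_r)

lemma rm_sub_zero: "rmodule M \<Longrightarrow> x \<in> mcarrier M \<Longrightarrow> msub M x (mzero M) = x"
  by (simp add: msub_def mneg_def rm_zero_smult rm_rzero)

lemma rm_add_sub: "rmodule M \<Longrightarrow> x \<in> mcarrier M \<Longrightarrow> y \<in> mcarrier M \<Longrightarrow> madd M y (msub M x y) = x"
proof -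
  assume M: "rmodule M" and x: "x \<in> mcarrier M" and y: "y \<in> mcarrier M"
  have "madd M y (msub M x y) = madd M y (madd M x (mneg M y))" by (simp add: msub_def)
  also have "\<dots> = madd M x (madd M y (mneg M y))"
    by (metis M x y rm_neg rm_assoc rm_comm)
  also have "\<dots> = x" using M x y by (simp add: rm_neg_r rm_rzero)
  finally show ?thesis .
qed

lemma rm_sub_add: "rmodule M \<Longrightarrow> x \<in> mcarrier M \<Longrightarrow> n \<in> mcarrier M \<Longrightarrow> msub M (madd M x n) x = n"
proof -
  assume M: "rmodule M" and x: "x \<in> mcarrier M" and n: "n \<in> mcarrier M"
  have "msub M (madd M x n) x = madd M (madd M x n) (mneg M x)" by (simp add: msub_def)
  also have "\<dots> = madd M n (madd M x (mneg M x))"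
    by (metis M x n rm_neg rm_assoc rm_comm)
  also have "\<dots> = n" using M x n by (simp add: rm_neg_r rm_rzero)
  finally show ?thesis .
qed

lemma rm_sub_eq0: "rmodule M \<Longrightarrow> x \<in> mcarrier M \<Longrightarrow> y \<in> mcarrier M \<Longrightarrow> msub M x y = mzero M \<longleftrightarrow> x = y"
  by (metis rm_add_sub rm_rzero rm_sub_self)
lemma rm_smult_assoc: "rmodule M \<Longrightarrow> x \<in> mcarrier M \<Longrightarrow> msmult M x (r * s) = msmult M (msmult M x r) s"
  unfolding rmodule_def by blast

lemma sub_simps[simp]:
  "mcarrier (sub M N) = N" "madd (sub M N) = madd M" "mzero (sub M N) = mzero M"
  "msmult (sub M N) = msmult M" "sub (sub M A) B = sub M B" "sub M (mcarrier M) = M"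
  by (simp_all add: sub_def)

lemma mneg_sub[simp]: "mneg (sub M N) = mneg M" by (simp add: mneg_def fun_eq_iff)
lemma msub_sub[simp]: "msub (sub M N) = msub M" by (simp add: msub_def fun_eq_iff)

lemma sm_carrier: "submodule M N \<Longrightarrow> N \<subseteq> mcarrier M" by (simp add: submodule_def)
lemma sm_zero: "submodule M N \<Longrightarrow> mzero M \<in> N" by (simp add: submodule_def)
lemma sm_add: "submodule M N \<Longrightarrow> x \<in> N \<Longrightarrow> y \<in> N \<Longrightarrow> madd M x y \<in> N" by (simp add: submodule_def)
lemma sm_smult: "submodule M N \<Longrightarrow> x \<in> N \<Longrightarrow> msmult M x r \<in> N" by (simp add: submodule_def)
lemma sm_neg: "submodule M N \<Longrightarrow> x \<in> N \<Longrightarrow> mneg M x \<in> N" by (simp add: submodule_def mneg_def)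
lemma sm_sub: "submodule M N \<Longrightarrow> x \<in> N \<Longrightarrow> y \<in> N \<Longrightarrow> msub M x y \<in> N"
  by (simp add: msub_def sm_add sm_neg)

lemma sm_top: "rmodule M \<Longrightarrow> submodule M (mcarrier M)"
  by (simp add: submodule_def rm_zero rm_add rm_smult)
lemma sm_zero_sm: "rmodule M \<Longrightarrow> submodule M {mzero M}"
  by (simp add: submodule_def rm_zero rm_zero_smult rm_lzero)
lemma sm_int: "submodule M A \<Longrightarrow> submodule M B \<Longrightarrow> submodule M (A \<inter> B)"
  by (auto simp add: submodule_def)

lemma submodule_sub_iff: "W \<subseteq> mcarrier M \<Longrightarrow> submodule (sub M W) N \<longleftrightarrow> N \<subseteq> W \<and> submodule M N"
  by (auto simp add: submodule_def)

lemma rmodule_sub: assumes M: "rmodule M" and N: "submodule M N" shows "rmodule (sub M N)"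
proof -
  have C: "\<And>x. x \<in> N \<Longrightarrow> x \<in> mcarrier M" using N by (auto simp add: submodule_def)
  show ?thesis unfolding rmodule_def sub_simps
  proof (intro conjI ballI allI)
    show "mzero M \<in> N" using N by (rule sm_zero)
    fix x y z r s assume x: "x \<in> N"
    show "msmult M x r \<in> N" using N x by (rule sm_smult)
    show "\<exists>y\<in>N. madd M x y = mzero M" using sm_neg[OF N x] rm_neg_r[OF M C[OF x]] by blast
    show "msmult M x (r + s) = madd M (msmult M x r) (msmult M x s)" by (rule rm_dr[OF M C[OF x]])
    show "msmult M x (r * s) = msmult M (msmult M x r) s" by (rule rm_smult_assoc[OF M C[OF x]])
    show "msmult M x 1 = x" by (rule rm_one[OF M C[OF x]])
    show "madd M (mzero M) x = x" by (rule rm_lzero[OF M C[OF x]])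
    assume y: "y \<in> N"
    show "madd M x y \<in> N" using N x y by (rule sm_add)
    show "madd M x y = madd M y x" by (rule rm_comm[OF M C[OF x] C[OF y]])
    show "msmult M (madd M x y) r = madd M (msmult M x r) (msmult M y r)" by (rule rm_dl[OF M C[OF x] C[OF y]])
    assume z: "z \<in> N"
    show "madd M (madd M x y) z = madd M x (madd M y z)" by (rule rm_assoc[OF M C[OF x] C[OF y] C[OF z]])
  qed
qed


section \<open>Homomorphisms\<close>

lemma hom_closed: "mhom A B f \<Longrightarrow> x \<in> mcarrier A \<Longrightarrow> f x \<in> mcarrier B" by (simp add: mhom_def)
lemma hom_add: "mhom A B f \<Longrightarrow> x \<in> mcarrier A \<Longrightarrow> y \<in> mcarrier A \<Longrightarrow> f (madd A x y) = madd B (f x) (f y)"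
  by (simp add: mhom_def)
lemma hom_smult: "mhom A B f \<Longrightarrow> x \<in> mcarrier A \<Longrightarrow> f (msmult A x r) = msmult B (f x) r"
  by (simp add: mhom_def)
lemma hom_zero: assumes "rmodule A" "rmodule B" "mhom A B f" shows "f (mzero A) = mzero B"
proof -
  have "f (mzero A) = f (madd A (mzero A) (mzero A))" using assms rm_lzero rm_zero by metis
  also have "\<dots> = madd B (f (mzero A)) (f (mzero A))" using assms hom_add rm_zero by metis
  finally show ?thesis using assms rm_idem hom_closed rm_zero by metis
qed
lemma hom_neg: "mhom A B f \<Longrightarrow> x \<in> mcarrier A \<Longrightarrow> f (mneg A x) = mneg B (f x)"
  by (simp add: mneg_def hom_smult)
lemma hom_sub: "mhom A B f \<Longrightarrow> x \<in> mcarrier A \<Longrightarrow> y \<in> mcarrier A \<Longrightarrow> rmodule A \<Longrightarrow> f (msub A x y) = msub B (f x) (f y)"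
  by (simp add: msub_def hom_add hom_neg rm_neg)

lemma hom_comp: "mhom A B f \<Longrightarrow> mhom B C g \<Longrightarrow> mhom A C (\<lambda>x. g (f x))"
  by (simp add: mhom_def)
lemma hom_restrict: "mhom A B f \<Longrightarrow> N \<subseteq> mcarrier A \<Longrightarrow> f ` N \<subseteq> W \<Longrightarrow> mhom (sub A N) (sub B W) f"
  by (auto simp add: mhom_def subset_iff)
lemma hom_restrict_dom: "mhom A B f \<Longrightarrow> N \<subseteq> mcarrier A \<Longrightarrow> mhom (sub A N) B f"
  by (auto simp add: mhom_def subset_iff)
lemma hom_incl: "submodule B N \<Longrightarrow> mhom (sub B N) B (\<lambda>x. x)"
  by (auto simp add: mhom_def submodule_def)
lemma hom_id: "rmodule B \<Longrightarrow> mhom B B (\<lambda>x. x)"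
  by (auto simp add: mhom_def rmodule_def)

lemma hom_inv:
  assumes h: "mhom A B f" and b: "bij_betw f (mcarrier A) (mcarrier B)" and A: "rmodule A"
  shows "mhom B A (inv_into (mcarrier A) f)"
  unfolding mhom_def
proof (intro conjI ballI allI)
  let ?g = "inv_into (mcarrier A) f"
  have g: "\<And>y. y \<in> mcarrier B \<Longrightarrow> ?g y \<in> mcarrier A \<and> f (?g y) = y"
    using b by (metis bij_betw_imp_surj_on bij_betw_inv_into_right inv_into_into)
  have gf: "\<And>x. x \<in> mcarrier A \<Longrightarrow> ?g (f x) = x" using b by (meson bij_betw_inv_into_left)
  fix x y assume x: "x \<in> mcarrier B"
  show "?g x \<in> mcarrier A" using g x by blast
  { assume y: "y \<in> mcarrier B"
    have "f (madd A (?g x) (?g y)) = madd B x y" using hom_add[OF h] g x y by metis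
    then show "?g (madd B x y) = madd A (?g x) (?g y)" using gf g x y rm_add[OF A] by metis }
  fix r
  have "f (msmult A (?g x) r) = msmult B x r" using hom_smult[OF h] g x by metis
  then show "?g (msmult B x r) = msmult A (?g x) r" using gf g x rm_smult[OF A] by metis
qed

lemma hom_image_sm:
  assumes A: "rmodule A" and B: "rmodule B" and f: "mhom A B f" and N: "submodule A N"
  shows "submodule B (f ` N)"
proof -
  have C: "\<And>x. x \<in> N \<Longrightarrow> x \<in> mcarrier A" using N by (auto simp add: submodule_def)
  show ?thesis unfolding submodule_def
  proof (intro conjI ballI allI)
    show "f ` N \<subseteq> mcarrier B" using C hom_closed[OF f] by blast
    show "mzero B \<in> f ` N" using hom_zero[OF A B f] sm_zero[OF N] by force
    fix x y r assume x: "x \<in> f ` N"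
    then obtain a where a: "a \<in> N" "x = f a" by blast
    show "msmult B x r \<in> f ` N" using a hom_smult[OF f C[OF a(1)], of r] sm_smult[OF N a(1), of r] by (metis image_eqI)
    assume y: "y \<in> f ` N"
    then obtain b where b: "b \<in> N" "y = f b" by blast
    show "madd B x y \<in> f ` N" using a b hom_add[OF f C[OF a(1)] C[OF b(1)]] sm_add[OF N a(1) b(1)] by force
  qed
qed

lemma hom_preimage_sm:
  assumes "rmodule A" "rmodule B" "mhom A B f" "submodule B K"
  shows "submodule A {x \<in> mcarrier A. f x \<in> K}"
  using assms unfolding submodule_def
  by (auto simp: rm_zero rm_add rm_smult hom_zero[OF assms(1-3)] hom_add hom_smult)

lemma hom_eq_iff: "rmodule A \<Longrightarrow> rmodule B \<Longrightarrow> mhom A B f \<Longrightarrow> x \<in> mcarrier A \<Longrightarrow> y \<in> mcarrier A \<Longrightarrow>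
   f x = f y \<longleftrightarrow> f (msub A x y) = mzero B"
  by (simp add: hom_sub rm_sub_eq0 hom_closed)

section \<open>Isomorphisms\<close>

lemma miso_refl: "rmodule M \<Longrightarrow> miso M M"
  unfolding miso_def by (rule exI[of _ "\<lambda>x. x"]) (simp add: hom_id bij_betw_id[unfolded id_def])

lemma miso_sym: "rmodule A \<Longrightarrow> miso A B \<Longrightarrow> miso B A"
  unfolding miso_def by (meson bij_betw_inv_into hom_inv)

lemma miso_trans: "miso A B \<Longrightarrow> miso B C \<Longrightarrow> miso A C"
proof -
  assume "miso A B" "miso B C"
  then obtain f g where "mhom A B f" "bij_betw f (mcarrier A) (mcarrier B)"
    "mhom B C g" "bij_betw g (mcarrier B) (mcarrier C)" unfolding miso_def by blast
  then have "mhom A C (\<lambda>x. g (f x))" "bij_betw (\<lambda>x. g (f x)) (mcarrier A) (mcarrier C)"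
    using hom_comp bij_betw_trans[unfolded comp_def] by blast+
  then show ?thesis unfolding miso_def by blast
qed

lemma rm_add4: assumes M: "rmodule M" and "a \<in> mcarrier M" "b \<in> mcarrier M" "c \<in> mcarrier M" "d \<in> mcarrier M"
  shows "madd M (madd M a b) (madd M c d) = madd M (madd M a c) (madd M b d)"
proof -
  have "madd M (madd M a b) (madd M c d) = madd M a (madd M b (madd M c d))" using assms rm_assoc rm_add by metis
  also have "madd M b (madd M c d) = madd M c (madd M b d)"
    using assms rm_assoc rm_add rm_comm by metis
  also have "madd M a (madd M c (madd M b d)) = madd M (madd M a c) (madd M b d)"
    using assms rm_assoc rm_add by metis
  finally show ?thesis .
qed

lemma rm_sub_trans: assumes M: "rmodule M" and x: "x \<in> mcarrier M" and y: "y \<in> mcarrier M" and z: "z \<in> mcarrier M"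
  shows "msub M z y = madd M (msub M z x) (msub M x y)"
proof -
  have nx: "mneg M x \<in> mcarrier M" and ny: "mneg M y \<in> mcarrier M" using rm_neg[OF M x] rm_neg[OF M y] by auto
  have "madd M (msub M z x) (msub M x y) = madd M (madd M z x) (madd M (mneg M x) (mneg M y))"
    unfolding msub_def by (rule rm_add4[OF M z nx x ny])
  also have "\<dots> = madd M z (madd M x (madd M (mneg M x) (mneg M y)))"
    using rm_assoc[OF M z x rm_add[OF M nx ny]] .
  also have "madd M x (madd M (mneg M x) (mneg M y)) = madd M (madd M x (mneg M x)) (mneg M y)"
    using M x nx ny by (simp add: rm_assoc)
  also have "\<dots> = mneg M y" using M x ny by (simp add: rm_neg_r rm_lzero)
  finally show ?thesis by (simp add: msub_def)
qed

lemma rm_neg_unique: assumes M: "rmodule M" and a: "a \<in> mcarrier M" and b: "b \<in> mcarrier M"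
  and e: "madd M a b = mzero M" shows "b = mneg M a"
  by (metis M a b e rm_cancel rm_neg rm_neg_r)

lemma sub_sym_mem: assumes M: "rmodule M" and N: "submodule M N" and x: "x \<in> mcarrier M" and y: "y \<in> mcarrier M"
  and d: "msub M x y \<in> N" shows "msub M y x \<in> N"
proof -
  have "madd M (msub M x y) (msub M y x) = mzero M"
    using rm_sub_trans[OF M y x x] rm_sub_self[OF M x] by simp
  then have "msub M y x = mneg M (msub M x y)" using rm_neg_unique M rm_sub x y by metis
  then show ?thesis using sm_neg[OF N d] by simp
qed

lemma quot_cz[simp]: "mcarrier (quot M N) = coset M N ` mcarrier M" "mzero (quot M N) = N"
  by (simp_all add: quot_def)

lemma quot_simps:
  "madd (quot M N) X Y = {madd M x y | x y. x \<in> X \<and> y \<in> Y}"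
  "msmult (quot M N) X r = coset M N (msmult M (SOME x. x \<in> X) r)"
  by (simp_all add: quot_def)

context
  fixes M :: "('r::ring_1, 'm) rmod" and N
  assumes M: "rmodule M" and N: "submodule M N"
begin

lemma NC: "n \<in> N \<Longrightarrow> n \<in> mcarrier M" using N by (auto simp: submodule_def)

lemma coset_mem: "x \<in> mcarrier M \<Longrightarrow> z \<in> coset M N x \<longleftrightarrow> z \<in> mcarrier M \<and> msub M z x \<in> N"
proof
  assume x: "x \<in> mcarrier M"
  { assume "z \<in> coset M N x"
    then obtain n where n: "n \<in> N" "z = madd M x n" unfolding coset_def by blast
    then show "z \<in> mcarrier M \<and> msub M z x \<in> N" using rm_add[OF M x NC[OF n(1)]] rm_sub_add[OF M x NC[OF n(1)]] by simp }
  { assume z: "z \<in> mcarrier M \<and> msub M z x \<in> N"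
    then have "z = madd M x (msub M z x)" using rm_add_sub[OF M, of z x] x by simp
    then show "z \<in> coset M N x" unfolding coset_def using z by blast }
qed

lemma coset_self: "x \<in> mcarrier M \<Longrightarrow> x \<in> coset M N x"
  using coset_mem rm_sub_self[OF M] sm_zero[OF N] by simp

lemma coset_sub: "x \<in> mcarrier M \<Longrightarrow> coset M N x \<subseteq> mcarrier M"
  using coset_mem by blast

lemma coset_eq: "x \<in> mcarrier M \<Longrightarrow> y \<in> mcarrier M \<Longrightarrow> coset M N x = coset M N y \<longleftrightarrow> msub M x y \<in> N"
proof
  assume x: "x \<in> mcarrier M" and y: "y \<in> mcarrier M"
  { assume "coset M N x = coset M N y"
    then show "msub M x y \<in> N" using coset_self[OF x] coset_mem[OF y] by blast }
  { assume d: "msub M x y \<in> N"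
    have d': "msub M y x \<in> N" using sub_sym_mem[OF M N x y d] .
    show "coset M N x = coset M N y"
    proof (rule set_eqI)
      fix z show "z \<in> coset M N x \<longleftrightarrow> z \<in> coset M N y"
        using coset_mem[OF x] coset_mem[OF y] rm_sub_trans[OF M x y] rm_sub_trans[OF M y x]
          sm_add[OF N] d d' by metis
    qed }
qed

lemma coset_zero: "coset M N (mzero M) = N"
  unfolding coset_def using rm_lzero[OF M] NC by auto (metis)

lemma coset_is_zero: "x \<in> mcarrier M \<Longrightarrow> coset M N x = N \<longleftrightarrow> x \<in> N"
  using coset_eq[OF _ rm_zero[OF M], of x] coset_zero rm_sub_zero[OF M] by simp

lemma quot_add: "x \<in> mcarrier M \<Longrightarrow> y \<in> mcarrier M \<Longrightarrow>
    madd (quot M N) (coset M N x) (coset M N y) = coset M N (madd M x y)"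
proof -
  assume x: "x \<in> mcarrier M" and y: "y \<in> mcarrier M"
  show ?thesis unfolding quot_simps
  proof (rule set_eqI, rule iffI)
    fix z assume "z \<in> {madd M a b |a b. a \<in> coset M N x \<and> b \<in> coset M N y}"
    then obtain n m where nm: "n \<in> N" "m \<in> N" "z = madd M (madd M x n) (madd M y m)"
      unfolding coset_def by blast
    then have "z = madd M (madd M x y) (madd M n m)" using rm_add4[OF M x NC[OF nm(1)] y NC[OF nm(2)]] by simp
    then show "z \<in> coset M N (madd M x y)" unfolding coset_def using sm_add[OF N nm(1,2)] by blast
  next
    fix z assume "z \<in> coset M N (madd M x y)"
    then obtain n where n: "n \<in> N" "z = madd M (madd M x y) n" unfolding coset_def by blast
    have "z = madd M (madd M x n) (madd M y (mzero M))"
      using rm_add4[OF M x NC[OF n(1)] y rm_zero[OF M]] n rm_rzero[OF M NC[OF n(1)]] by simp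
    then show "z \<in> {madd M a b |a b. a \<in> coset M N x \<and> b \<in> coset M N y}"
      unfolding coset_def using n(1) sm_zero[OF N] by blast
  qed
qed

lemma some_coset: "x \<in> mcarrier M \<Longrightarrow> (SOME z. z \<in> coset M N x) \<in> coset M N x"
  using coset_self by (meson someI)

lemma smult_sub: "a \<in> mcarrier M \<Longrightarrow> b \<in> mcarrier M \<Longrightarrow>
   msub M (msmult M a r) (msmult M b r) = msmult M (msub M a b) r"
proof -
  assume a: "a \<in> mcarrier M" and b: "b \<in> mcarrier M"
  have "mneg M (msmult M b r) = msmult M (mneg M b) r"
    unfolding mneg_def using rm_smult_assoc[OF M b] by (metis mult_minus1 mult_minus1_right)
  then show ?thesis unfolding msub_def using rm_dl[OF M a rm_neg[OF M b]] by simp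
qed

lemma quot_smult: "x \<in> mcarrier M \<Longrightarrow> msmult (quot M N) (coset M N x) r = coset M N (msmult M x r)"
proof -
  assume x: "x \<in> mcarrier M"
  define z where "z = (SOME z. z \<in> coset M N x)"
  have z: "z \<in> mcarrier M" "msub M z x \<in> N" using some_coset[OF x] coset_mem[OF x] z_def by auto
  have "msub M (msmult M z r) (msmult M x r) \<in> N" using smult_sub[OF z(1) x] sm_smult[OF N z(2)] by simp
  then show ?thesis using coset_eq rm_smult[OF M] z x by (simp add: z_def[symmetric] quot_simps)
qed

lemma rmodule_quot: "rmodule (quot M N)"
proof -
  have C: "\<And>X. X \<in> mcarrier (quot M N) \<Longrightarrow> \<exists>x\<in>mcarrier M. X = coset M N x" by auto
  show ?thesis unfolding rmodule_def
  proof (intro conjI ballI allI)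
    show "mzero (quot M N) \<in> mcarrier (quot M N)" using coset_zero rm_zero[OF M] by force
    fix X Y Z r s assume X: "X \<in> mcarrier (quot M N)"
    then obtain x where x: "x \<in> mcarrier M" "X = coset M N x" by auto
    show "msmult (quot M N) X r \<in> mcarrier (quot M N)" using x quot_smult rm_smult[OF M] by simp
    show "\<exists>Y\<in>mcarrier (quot M N). madd (quot M N) X Y = mzero (quot M N)"
    proof
      show "coset M N (mneg M x) \<in> mcarrier (quot M N)" using rm_neg[OF M x(1)] by simp
      show "madd (quot M N) X (coset M N (mneg M x)) = mzero (quot M N)"
        using x quot_add rm_neg[OF M x(1)] rm_neg_r[OF M x(1)] coset_zero by simp
    qed
    show "msmult (quot M N) X (r + s) = madd (quot M N) (msmult (quot M N) X r) (msmult (quot M N) X s)"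
      using x quot_smult quot_add rm_smult[OF M] rm_dr[OF M] by simp
    show "msmult (quot M N) X (r * s) = msmult (quot M N) (msmult (quot M N) X r) s"
      using x quot_smult rm_smult[OF M] rm_smult_assoc[OF M] by simp
    show "msmult (quot M N) X 1 = X" using x quot_smult rm_one[OF M] by simp
    show "madd (quot M N) (mzero (quot M N)) X = X"
      using x quot_add[OF rm_zero[OF M] x(1)] coset_zero rm_lzero[OF M x(1)] by simp
    assume Y: "Y \<in> mcarrier (quot M N)"
    then obtain y where y: "y \<in> mcarrier M" "Y = coset M N y" by auto
    show "madd (quot M N) X Y \<in> mcarrier (quot M N)" using x y quot_add rm_add[OF M] by simp
    show "madd (quot M N) X Y = madd (quot M N) Y X" using x y quot_add rm_comm[OF M] by metis
    show "msmult (quot M N) (madd (quot M N) X Y) r =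
          madd (quot M N) (msmult (quot M N) X r) (msmult (quot M N) Y r)"
      using x y quot_add quot_smult rm_add[OF M] rm_smult[OF M] rm_dl[OF M] by simp
    assume Z: "Z \<in> mcarrier (quot M N)"
    then obtain z where z: "z \<in> mcarrier M" "Z = coset M N z" by auto
    show "madd (quot M N) (madd (quot M N) X Y) Z = madd (quot M N) X (madd (quot M N) Y Z)"
      using x y z quot_add rm_add[OF M] rm_assoc[OF M] by simp
  qed
qed

lemma coset_hom: "mhom M (quot M N) (coset M N)"
  unfolding mhom_def
proof (intro conjI ballI allI)
  fix x y r assume x: "x \<in> mcarrier M"
  show "coset M N x \<in> mcarrier (quot M N)" using x by simp
  show "coset M N (msmult M x r) = msmult (quot M N) (coset M N x) r" using quot_smult[OF x] by simp
  assume y: "y \<in> mcarrier M"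
  show "coset M N (madd M x y) = madd (quot M N) (coset M N x) (coset M N y)" using quot_add[OF x y] by simp
qed

end

definition sqmap :: "('r, 'a) rmod \<Rightarrow> ('r, 'b) rmod \<Rightarrow> ('a \<Rightarrow> 'b) \<Rightarrow> 'a set \<Rightarrow> bool" where
  "sqmap M Q p K \<longleftrightarrow> mhom M Q p \<and> p ` mcarrier M = mcarrier Q \<and> {x \<in> mcarrier M. p x = mzero Q} = K"

lemma sq_coset: "rmodule M \<Longrightarrow> submodule M N \<Longrightarrow> sqmap M (quot M N) (coset M N) N"
  unfolding sqmap_def using coset_hom coset_is_zero sm_carrier by fastforce

lemma sq_comp: "sqmap M Q p K \<Longrightarrow> sqmap Q R q L \<Longrightarrow> sqmap M R (\<lambda>x. q (p x)) {x \<in> mcarrier M. p x \<in> L}"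
  unfolding sqmap_def using hom_comp hom_closed by (fastforce simp: image_image[symmetric])

lemma sq_iso: assumes h: "mhom A B f" and b: "bij_betw f (mcarrier A) (mcarrier B)" and A: "rmodule A" and B: "rmodule B"
  shows "sqmap A B f {mzero A}"
proof -
  have z: "f (mzero A) = mzero B" by (rule hom_zero[OF A B h])
  have "{x \<in> mcarrier A. f x = mzero B} = {mzero A}"
  proof (rule set_eqI, rule iffI)
    fix x assume "x \<in> {x \<in> mcarrier A. f x = mzero B}"
    then show "x \<in> {mzero A}" using z b rm_zero[OF A] unfolding bij_betw_def inj_on_def by auto
  next
    fix x assume "x \<in> {mzero A}" then show "x \<in> {x \<in> mcarrier A. f x = mzero B}" using z rm_zero[OF A] by auto
  qed
  then show ?thesis unfolding sqmap_def using h b bij_betw_imp_surj_on by blast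
qed

lemma sq_iso_inv: "mhom A B f \<Longrightarrow> bij_betw f (mcarrier A) (mcarrier B) \<Longrightarrow> rmodule A \<Longrightarrow> rmodule B \<Longrightarrow>
   sqmap B A (inv_into (mcarrier A) f) {mzero B}"
  using sq_iso[of B A "inv_into (mcarrier A) f"] hom_inv bij_betw_inv_into by blast

lemma sq_ker_sm: "sqmap M Q p K \<Longrightarrow> rmodule M \<Longrightarrow> rmodule Q \<Longrightarrow> submodule M K"
  unfolding sqmap_def using hom_preimage_sm[of M Q p "{mzero Q}"] sm_zero_sm[of Q] by auto

lemma sq_eq_iff: assumes s: "sqmap M Q p K" and M: "rmodule M" and Q: "rmodule Q" and x: "x \<in> mcarrier M"
  and y: "y \<in> mcarrier M" shows "p x = p y \<longleftrightarrow> msub M x y \<in> K"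
proof -
  have h: "mhom M Q p" and k: "{x \<in> mcarrier M. p x = mzero Q} = K" using s unfolding sqmap_def by auto
  have "p x = p y \<longleftrightarrow> p (msub M x y) = mzero Q" by (rule hom_eq_iff[OF M Q h x y])
  also have "\<dots> \<longleftrightarrow> msub M x y \<in> K" using k rm_sub[OF M x y] by blast
  finally show ?thesis .
qed

lemma first_iso:
  assumes B: "rmodule B" and C: "rmodule C" and s: "sqmap B C p N"
  shows "miso (quot B N) C"
proof -
  have N: "submodule B N" using sq_ker_sm[OF s B C] .
  have h: "mhom B C p" "p ` mcarrier B = mcarrier C" using s unfolding sqmap_def by auto
  define F where "F X = p (SOME x. x \<in> X)" for X
  have F: "x \<in> mcarrier B \<Longrightarrow> F (coset B N x) = p x" for x
  proof -
    assume x: "x \<in> mcarrier B"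
    let ?z = "SOME z. z \<in> coset B N x"
    have "?z \<in> mcarrier B" "msub B ?z x \<in> N" using some_coset[OF B N x] coset_mem[OF B N x] by auto
    then show ?thesis unfolding F_def using sq_eq_iff[OF s B C] x by blast
  qed
  have hom: "mhom (quot B N) C F"
    unfolding mhom_def using F quot_add[OF B N] quot_smult[OF B N] h rm_add[OF B] rm_smult[OF B]
    by (auto simp: hom_closed hom_add hom_smult)
  have "inj_on F (mcarrier (quot B N))"
  proof (rule inj_onI)
    fix X Y assume "X \<in> mcarrier (quot B N)" "Y \<in> mcarrier (quot B N)" "F X = F Y"
    then obtain x y where xy: "x \<in> mcarrier B" "y \<in> mcarrier B" "X = coset B N x" "Y = coset B N y" "F X = F Y" by auto
    then have "p x = p y" using F by simp
    then show "X = Y" using xy coset_eq[OF B N xy(1,2)] sq_eq_iff[OF s B C xy(1,2)] by simp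
  qed
  moreover have "F ` mcarrier (quot B N) = mcarrier C" using F h(2) by (auto simp: image_image)
  ultimately show ?thesis unfolding miso_def bij_betw_def using hom by blast
qed

lemma miso_quot_sq:
  assumes C: "rmodule C" and B: "rmodule B" and N: "submodule B N" and i: "miso C (quot B N)"
  shows "\<exists>g. sqmap B C g N"
proof -
  obtain f where f: "mhom C (quot B N) f" "bij_betw f (mcarrier C) (mcarrier (quot B N))"
    using i unfolding miso_def by blast
  have sq1: "sqmap (quot B N) C (inv_into (mcarrier C) f) {N}"
    using sq_iso_inv[OF f C rmodule_quot[OF B N]] by simp
  have "sqmap B C (\<lambda>x. inv_into (mcarrier C) f (coset B N x)) N"
  proof -
    have "{x \<in> mcarrier B. coset B N x \<in> {N}} = N" using coset_is_zero[OF B N] sm_carrier[OF N] by auto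
    then show "sqmap B C (\<lambda>x. inv_into (mcarrier C) f (coset B N x)) N" using sq_comp[OF sq_coset[OF B N] sq1] by simp
  qed
  then show ?thesis by blast
qed

lemma factor_through:
  assumes M: "rmodule M" and Q: "rmodule Q" and F: "rmodule F"
    and p: "sqmap M Q p K" and u: "sqmap M F u L" and KL: "K \<subseteq> L"
  shows "\<exists>t. sqmap Q F t (p ` L) \<and> (\<forall>x\<in>mcarrier M. t (p x) = u x)"
proof -
  define t where "t q = u (SOME m. m \<in> mcarrier M \<and> p m = q)" for q
  have hp: "mhom M Q p" "p ` mcarrier M = mcarrier Q" using p unfolding sqmap_def by auto
  have hu: "mhom M F u" "u ` mcarrier M = mcarrier F" using u unfolding sqmap_def by auto
  have tp: "t (p x) = u x" if x: "x \<in> mcarrier M" for x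
  proof -
    let ?m = "SOME m. m \<in> mcarrier M \<and> p m = p x"
    have m: "?m \<in> mcarrier M \<and> p ?m = p x" using x by (metis (mono_tags, lifting) someI)
    then have "msub M ?m x \<in> K" using sq_eq_iff[OF p M Q] x by blast
    then have "u ?m = u x" using sq_eq_iff[OF u M F] x m KL by blast
    then show ?thesis unfolding t_def .
  qed
  have hom: "mhom Q F t" unfolding mhom_def
  proof (intro conjI ballI allI)
    fix a b r assume a: "a \<in> mcarrier Q"
    obtain x where x: "x \<in> mcarrier M" "a = p x" using a hp(2) by blast
    show "t a \<in> mcarrier F" using x tp hom_closed[OF hu(1)] by simp
    show "t (msmult Q a r) = msmult F (t a) r"
      using x tp hom_smult[OF hp(1)] hom_smult[OF hu(1)] rm_smult[OF M] by metis
    assume b: "b \<in> mcarrier Q"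
    obtain y where y: "y \<in> mcarrier M" "b = p y" using b hp(2) by blast
    show "t (madd Q a b) = madd F (t a) (t b)"
      using x y tp hom_add[OF hp(1)] hom_add[OF hu(1)] rm_add[OF M] by metis
  qed
  have surj: "t ` mcarrier Q = mcarrier F"
  proof -
    have "t ` mcarrier Q = t ` p ` mcarrier M" using hp(2) by simp
    also have "\<dots> = u ` mcarrier M" using tp by (simp add: image_image)
    finally show ?thesis using hu(2) by simp
  qed
  have ker: "{q \<in> mcarrier Q. t q = mzero F} = p ` L"
  proof -
    have L: "L = {x \<in> mcarrier M. u x = mzero F}" using u unfolding sqmap_def by blast
    show ?thesis
    proof (rule set_eqI, rule iffI)
      fix q assume "q \<in> {q \<in> mcarrier Q. t q = mzero F}"
      then have q: "q \<in> mcarrier Q" "t q = mzero F" by auto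
      then obtain x where "x \<in> mcarrier M" "q = p x" using hp(2) by blast
      with q have "x \<in> mcarrier M" "q = p x" "t q = mzero F" by auto
      then show "q \<in> p ` L" using L tp by auto
    next
      fix q assume "q \<in> p ` L"
      then show "q \<in> {q \<in> mcarrier Q. t q = mzero F}" using L tp hp(2) by auto
    qed
  qed
  show ?thesis unfolding sqmap_def using hom surj ker tp by blast
qed

lemma zero_carrier:
  assumes Z: "rmodule Z" and B: "rmodule B" and i: "miso Z (quot B (mcarrier B))"
  shows "mcarrier Z = {mzero Z}"
proof -
  have q: "mcarrier (quot B (mcarrier B)) = {mcarrier B}"
    using coset_is_zero[OF B sm_top[OF B]] rm_zero[OF B] by auto
  obtain f where f: "bij_betw f (mcarrier Z) (mcarrier (quot B (mcarrier B)))" using i unfolding miso_def by blast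
  have "\<And>x. x \<in> mcarrier Z \<Longrightarrow> x = mzero Z"
    using f q rm_zero[OF Z] unfolding bij_betw_def inj_on_def by (metis image_eqI singletonD)
  then show ?thesis using rm_zero[OF Z] by blast
qed

lemma miso_zero:
  assumes Z: "rmodule Z" and z: "mcarrier Z = {mzero Z}" and M: "rmodule M"
  shows "miso Z (sub M {mzero M})"
  unfolding miso_def
proof (intro exI conjI)
  show "mhom Z (sub M {mzero M}) (\<lambda>_. mzero M)"
    unfolding mhom_def using rm_lzero[OF M rm_zero[OF M]] rm_zero_smult[OF M] by simp
  show "bij_betw (\<lambda>_. mzero M) (mcarrier Z) (mcarrier (sub M {mzero M}))"
    using z by (simp add: bij_betw_def)
qed

context
  fixes G :: "('r::ring_1, 'm) rmod \<Rightarrow> bool"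
  assumes T: "torsion_class G"
begin

lemma T_rm: "G M \<Longrightarrow> rmodule M" using T unfolding torsion_class_def fg_module_def by blast
lemma T_iso: "G B \<Longrightarrow> miso B C \<Longrightarrow> G C" using T unfolding torsion_class_def by blast
lemma T_ext: "G A \<Longrightarrow> G C \<Longrightarrow> short_exact A B C f g \<Longrightarrow> G B" using T unfolding torsion_class_def by blast
lemma T_quot: "G B \<Longrightarrow> submodule B N \<Longrightarrow> in_class G (quot B N)" using T unfolding torsion_class_def by blast
lemma T_ne: "\<exists>M. G M" using T unfolding torsion_class_def by blast

lemma quot_copy:
  assumes B: "G B" and N: "submodule B N"
  shows "\<exists>C p. G C \<and> sqmap B C p N \<and> miso C (quot B N)"
proof -
  obtain C where C: "G C" "miso C (quot B N)" using T_quot[OF B N] unfolding in_class_def by blast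
  obtain p where "sqmap B C p N" using miso_quot_sq[OF T_rm[OF C(1)] T_rm[OF B] N C(2)] by blast
  then show ?thesis using C by blast
qed

lemma G_img:
  assumes M: "G M" and Q: "rmodule Q" and p: "mhom M Q p"
  shows "G (sub Q (p ` mcarrier M))"
proof -
  have Mr: "rmodule M" using T_rm[OF M] .
  define K where "K = {x \<in> mcarrier M. p x = mzero Q}"
  have sm: "submodule Q (p ` mcarrier M)" using hom_image_sm[OF Mr Q p sm_top[OF Mr]] .
  have "mhom (sub M (mcarrier M)) (sub Q (p ` mcarrier M)) p" by (rule hom_restrict[OF p]) auto
  then have s: "sqmap M (sub Q (p ` mcarrier M)) p K" unfolding sqmap_def K_def by simp
  have R: "rmodule (sub Q (p ` mcarrier M))" using rmodule_sub[OF Q sm] .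
  have i1: "miso (quot M K) (sub Q (p ` mcarrier M))" using first_iso[OF Mr R s] .
  obtain C where C: "G C" "miso C (quot M K)" using T_quot[OF M sq_ker_sm[OF s Mr R]] unfolding in_class_def by blast
  show ?thesis using T_iso[OF C(1) miso_trans[OF C(2) i1]] .
qed

lemma G_img_sub:
  assumes A: "rmodule A" and N: "submodule A N" and GN: "G (sub A N)" and Q: "rmodule Q" and p: "mhom A Q p"
  shows "G (sub Q (p ` N))"
  using G_img[OF GN Q hom_restrict_dom[OF p sm_carrier[OF N]]] by simp

lemma G_ext:
  assumes B: "rmodule B" and W: "submodule B W" and Q: "rmodule Q" and p: "mhom B Q p"
    and GK: "G (sub B {x \<in> W. p x = mzero Q})" and GI: "G (sub Q (p ` W))"
  shows "G (sub B W)"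
proof -
  define K where "K = {x \<in> W. p x = mzero Q}"
  have WC: "W \<subseteq> mcarrier B" using sm_carrier[OF W] .
  have Ksm: "submodule B K"
  proof -
    have "K = W \<inter> {x \<in> mcarrier B. p x \<in> {mzero Q}}" using WC unfolding K_def by auto
    then show ?thesis using sm_int[OF W hom_preimage_sm[OF B Q p sm_zero_sm[OF Q]]] by simp
  qed
  have KW: "K \<subseteq> W" unfolding K_def by auto
  have se: "short_exact (sub B K) (sub B W) (sub Q (p ` W)) (\<lambda>x. x) p"
    unfolding short_exact_def
  proof (intro conjI)
    show "rmodule (sub B K)" using rmodule_sub[OF B Ksm] .
    show "rmodule (sub B W)" using rmodule_sub[OF B W] .
    show "rmodule (sub Q (p ` W))" using rmodule_sub[OF Q hom_image_sm[OF B Q p W]] .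
    show "mhom (sub B K) (sub B W) (\<lambda>x. x)" unfolding mhom_def using KW by auto
    show "mhom (sub B W) (sub Q (p ` W)) p" by (rule hom_restrict[OF p WC]) simp
    show "inj_on (\<lambda>x. x) (mcarrier (sub B K))" by simp
    show "p ` mcarrier (sub B W) = mcarrier (sub Q (p ` W))" by simp
    show "(\<lambda>x. x) ` mcarrier (sub B K) = mkernel (sub B W) (sub Q (p ` W)) p"
      unfolding mkernel_def K_def by simp
  qed
  show ?thesis using T_ext[OF GK[folded K_def] GI se] .
qed

lemma G_zero: assumes M: "rmodule M" shows "G (sub M {mzero M})"
proof -
  obtain B where B: "G B" using T_ne by blast
  obtain C where C: "G C" "miso C (quot B (mcarrier B))"
    using T_quot[OF B sm_top[OF T_rm[OF B]]] unfolding in_class_def by blast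
  have "mcarrier C = {mzero C}" using zero_carrier[OF T_rm[OF C(1)] T_rm[OF B] C(2)] .
  then show ?thesis using T_iso[OF C(1) miso_zero[OF T_rm[OF C(1)] _ M]] by blast
qed

lemma strict_zero: assumes M: "G M" shows "strict_subobject G M {mzero M}"
  unfolding strict_subobject_def subobject_def
proof (intro conjI allI impI)
  show "submodule M {mzero M}" using sm_zero_sm[OF T_rm[OF M]] .
  show "G (sub M {mzero M})" using G_zero[OF T_rm[OF M]] .
  fix B' assume "submodule M B' \<and> G (sub M B')"
  then have "{mzero M} \<inter> B' = {mzero M}" using sm_zero by blast
  then show "G (sub M ({mzero M} \<inter> B'))" using G_zero[OF T_rm[OF M]] by simp
qed

lemma strict_top: assumes M: "G M" shows "strict_subobject G M (mcarrier M)"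
  unfolding strict_subobject_def subobject_def
proof (intro conjI allI impI)
  show "submodule M (mcarrier M)" using sm_top[OF T_rm[OF M]] .
  show "G (sub M (mcarrier M))" using M by simp
  fix B' assume "submodule M B' \<and> G (sub M B')"
  then have "mcarrier M \<inter> B' = B'" using sm_carrier by blast
  then show "G (sub M (mcarrier M \<inter> B'))" using \<open>submodule M B' \<and> G (sub M B')\<close> by simp
qed

lemma subobject_top: "G M \<Longrightarrow> subobject G M (mcarrier M)"
  using strict_top unfolding strict_subobject_def by blast

lemma strict_sm: "strict_subobject G M T \<Longrightarrow> submodule M T"
  unfolding strict_subobject_def subobject_def by blast
lemma strict_G: "strict_subobject G M T \<Longrightarrow> G (sub M T)"
  unfolding strict_subobject_def subobject_def by blast
lemma strict_int: "strict_subobject G M T \<Longrightarrow> subobject G M B' \<Longrightarrow> G (sub M (T \<inter> B'))"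
  unfolding strict_subobject_def by blast

lemma subobject_sub_iff: "submodule M W \<Longrightarrow> subobject G (sub M W) N \<longleftrightarrow> N \<subseteq> W \<and> subobject G M N"
  unfolding subobject_def using submodule_sub_iff[OF sm_carrier] by auto

lemma strict_trans:
  assumes TW: "strict_subobject G (sub B W) T" and W: "strict_subobject G B W"
  shows "strict_subobject G B T"
proof -
  have Wsm: "submodule B W" using strict_sm[OF W] .
  have TsW: "T \<subseteq> W" "subobject G B T" using TW unfolding strict_subobject_def subobject_sub_iff[OF Wsm] by auto
  show ?thesis unfolding strict_subobject_def
  proof (intro conjI allI impI)
    show "subobject G B T" using TsW(2) .
    fix B' assume B': "subobject G B B'"
    have "subobject G B (W \<inter> B')"
      unfolding subobject_def using strict_int[OF W B'] sm_int[OF Wsm] B' unfolding subobject_def by auto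
    then have "subobject G (sub B W) (W \<inter> B')" using subobject_sub_iff[OF Wsm] by blast
    then have "G (sub (sub B W) (T \<inter> (W \<inter> B')))" using strict_int[OF TW] by blast
    moreover have "T \<inter> (W \<inter> B') = T \<inter> B'" using TsW(1) by blast
    ultimately show "G (sub B (T \<inter> B'))" by simp
  qed
qed

lemma strict_restrict:
  assumes TS: "strict_subobject G M T" and W: "subobject G M W" and TW: "T \<subseteq> W"
  shows "strict_subobject G (sub M W) T"
proof -
  have Wsm: "submodule M W" using W unfolding subobject_def by blast
  show ?thesis unfolding strict_subobject_def subobject_sub_iff[OF Wsm]
    using TS TW unfolding strict_subobject_def by auto
qed

lemma strict_pre:
  assumes Y: "G Y" and Q: "G Q" and p: "sqmap Y Q p S" and S: "strict_subobject G Y S"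
    and K: "strict_subobject G Q K"
  shows "strict_subobject G Y {y \<in> mcarrier Y. p y \<in> K}"
proof -
  define T where "T = {y \<in> mcarrier Y. p y \<in> K}"
  have Yr: "rmodule Y" and Qr: "rmodule Q" using T_rm Y Q by auto
  have h: "mhom Y Q p" and ps: "p ` mcarrier Y = mcarrier Q" and ker: "{x \<in> mcarrier Y. p x = mzero Q} = S"
    using p unfolding sqmap_def by auto
  have Tsm: "submodule Y T" unfolding T_def using hom_preimage_sm[OF Yr Qr h strict_sm[OF K]] .
  have main: "G (sub Y (T \<inter> Y'))" if Y': "subobject G Y Y'" for Y'
  proof -
    have Y'sm: "submodule Y Y'" using Y' unfolding subobject_def by blast
    have W: "submodule Y (T \<inter> Y')" using sm_int[OF Tsm Y'sm] .
    have k: "{x \<in> T \<inter> Y'. p x = mzero Q} = S \<inter> Y'"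
      using ker sm_zero[OF strict_sm[OF K]] unfolding T_def by auto
    have G1: "G (sub Y (S \<inter> Y'))" using strict_int[OF S Y'] .
    have img: "p ` (T \<inter> Y') = K \<inter> p ` Y'" unfolding T_def using sm_carrier[OF Y'sm] by auto
    have "G (sub Q (p ` Y'))" using G_img_sub[OF Yr Y'sm _ Qr h] Y' unfolding subobject_def by blast
    moreover have "submodule Q (p ` Y')" using hom_image_sm[OF Yr Qr h Y'sm] .
    ultimately have "G (sub Q (K \<inter> p ` Y'))" using strict_int[OF K] unfolding subobject_def by blast
    then show ?thesis using G_ext[OF Yr W Qr h] G1 k img by simp
  qed
  show ?thesis unfolding T_def[symmetric] strict_subobject_def
  proof (intro conjI allI impI)
    show "subobject G Y T" unfolding subobject_def using Tsm main[OF subobject_top[OF Y]] sm_carrier[OF Tsm]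
      by (simp add: Int_absorb2)
    fix B' assume "subobject G Y B'" then show "G (sub Y (T \<inter> B'))" using main by blast
  qed
qed

lemma strict_desc:
  assumes Y: "G Y" and Q: "G Q" and p: "sqmap Y Q p K0" and GK: "G (sub Y K0)"
    and Tsm: "submodule Y T" and GT: "G (sub Y T)"
    and TN: "\<And>N. subobject G Y N \<Longrightarrow> K0 \<subseteq> N \<Longrightarrow> G (sub Y (T \<inter> N))"
  shows "strict_subobject G Q (p ` T)"
proof -
  have Yr: "rmodule Y" and Qr: "rmodule Q" using T_rm Y Q by auto
  have h: "mhom Y Q p" and ps: "p ` mcarrier Y = mcarrier Q" and ker: "{x \<in> mcarrier Y. p x = mzero Q} = K0"
    using p unfolding sqmap_def by auto
  show ?thesis unfolding strict_subobject_def subobject_def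
  proof (intro conjI allI impI)
    show "submodule Q (p ` T)" using hom_image_sm[OF Yr Qr h Tsm] .
    show "G (sub Q (p ` T))" using G_img_sub[OF Yr Tsm GT Qr h] .
    fix Q' assume Q': "submodule Q Q' \<and> G (sub Q Q')"
    define N where "N = {y \<in> mcarrier Y. p y \<in> Q'}"
    have Nsm: "submodule Y N" unfolding N_def using hom_preimage_sm[OF Yr Qr h] Q' by blast
    have "{x \<in> N. p x = mzero Q} = K0" using ker sm_zero[of Q Q'] Q' unfolding N_def by auto
    moreover have "p ` N = Q'" unfolding N_def using ps sm_carrier[of Q Q'] Q' by auto
    ultimately have GN: "G (sub Y N)" using G_ext[OF Yr Nsm Qr h] GK Q' by simp
    have K0N: "K0 \<subseteq> N" using ker sm_zero[of Q Q'] Q' unfolding N_def by auto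
    have "G (sub Y (T \<inter> N))" using TN[OF _ K0N] GN Nsm unfolding subobject_def by blast
    moreover have "p ` (T \<inter> N) = p ` T \<inter> Q'" unfolding N_def using sm_carrier[OF Tsm] by auto
    moreover have "submodule Y (T \<inter> N)" using sm_int[OF Tsm Nsm] .
    ultimately show "G (sub Q (p ` T \<inter> Q'))" using G_img_sub[OF Yr _ _ Qr h] by metis
  qed
qed

lemma strict_desc':
  assumes Y: "G Y" and Q: "G Q" and p: "sqmap Y Q p K0" and GK: "G (sub Y K0)"
    and TS: "strict_subobject G Y T"
  shows "strict_subobject G Q (p ` T)"
  using strict_desc[OF Y Q p GK strict_sm[OF TS] strict_G[OF TS]] strict_int[OF TS] by blast

end

context
  fixes G X :: "('r::ring_1, 'm) rmod \<Rightarrow> bool"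
  assumes T: "torsion_class G" and XG: "\<forall>M. X M \<longrightarrow> G M"
begin

lemma filt_X: assumes XM: "X M" shows "Filt G X M"
proof -
  have M: "G M" using XG XM by blast
  define Ms where "Ms = (\<lambda>i::nat. if i = 0 then {mzero M} else mcarrier M)"
  have "Ms 0 = {mzero M} \<and> Ms 1 = mcarrier M \<and>
        (\<forall>i\<le>1. strict_subobject G M (Ms i)) \<and> (\<forall>i<1. Ms i \<subseteq> Ms (Suc i)) \<and>
        (\<forall>i<1. \<exists>Y S. X Y \<and> strict_subobject G Y S \<and>
                 miso (quot (sub M (Ms (Suc i))) (Ms i)) (quot Y S))"
  proof (intro conjI allI impI)
    show "Ms 0 = {mzero M}" "Ms 1 = mcarrier M" unfolding Ms_def by auto
    fix i :: nat
    { assume "i \<le> 1" show "strict_subobject G M (Ms i)"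
      proof (cases "i = 0")
        case True then show ?thesis using strict_zero[OF T M] unfolding Ms_def by simp
      next
        case False then show ?thesis using strict_top[OF T M] unfolding Ms_def by simp
      qed }
    { assume "i < 1" then have "i = 0" by simp
      then show "Ms i \<subseteq> Ms (Suc i)" unfolding Ms_def using rm_zero[OF T_rm[OF T M]] by simp }
    { assume i: "i < 1"
      have "miso (quot M {mzero M}) (quot M {mzero M})"
        using miso_refl rmodule_quot[OF T_rm[OF T M] sm_zero_sm[OF T_rm[OF T M]]] by blast
      moreover have "i = 0" using i by simp
      ultimately have "miso (quot (sub M (Ms (Suc i))) (Ms i)) (quot M {mzero M})" unfolding Ms_def by simp
      then show "\<exists>Y S. X Y \<and> strict_subobject G Y S \<and> miso (quot (sub M (Ms (Suc i))) (Ms i)) (quot Y S)"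
        using XM strict_zero[OF T M] by blast }
  qed
  note h = this
  show ?thesis unfolding Filt_def
    by (rule conjI[OF M], rule exI[of _ 1], rule exI[of _ Ms], rule h)
qed

lemma filt_ne: "\<exists>M. Filt G X M"
proof -
  obtain B where B: "G B" using T_ne[OF T] by blast
  define Z where "Z = sub B {mzero B}"
  have Z: "G Z" unfolding Z_def using G_zero[OF T T_rm[OF T B]] .
  have "Filt G X Z" unfolding Filt_def
  proof (intro conjI exI[of _ 0] exI[of _ "\<lambda>_. {mzero B}"])
    show "G Z" by (rule Z)
    show "{mzero B} = {mzero Z}" unfolding Z_def by simp
    show "{mzero B} = mcarrier Z" unfolding Z_def by simp
    show "\<forall>i\<le>0. strict_subobject G Z {mzero B}" using strict_zero[OF T Z] unfolding Z_def by simp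
  qed auto
  then show ?thesis by blast
qed

context
  fixes P :: "('r, 'm) rmod \<Rightarrow> bool"
  assumes P: "pseudo_torsion_class G P"
begin

lemma PG: "P M \<Longrightarrow> G M" using P unfolding pseudo_torsion_class_def by blast
lemma P_ext: "P A \<Longrightarrow> P C \<Longrightarrow> strict_exact G A B C f g \<Longrightarrow> P B"
  using P unfolding pseudo_torsion_class_def by blast
lemma P_quot: "P A \<Longrightarrow> strict_subobject G A S \<Longrightarrow> in_class P (quot A S)"
  using P unfolding pseudo_torsion_class_def by blast

lemma P_zero: "\<exists>Z. P Z \<and> mcarrier Z = {mzero Z}"
proof -
  obtain A where A: "P A" using P unfolding pseudo_torsion_class_def by blast
  obtain Z where Z: "P Z" "miso Z (quot A (mcarrier A))"
    using P_quot[OF A strict_top[OF T PG[OF A]]] unfolding in_class_def by blast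
  show ?thesis using Z zero_carrier[OF T_rm[OF T PG[OF Z(1)]] T_rm[OF T PG[OF A]] Z(2)] by blast
qed

lemma P_iso: assumes C: "P C" and i: "miso C D" shows "P D"
proof -
  obtain Z where Z: "P Z" "mcarrier Z = {mzero Z}" using P_zero by blast
  have GD: "G D" using T_iso[OF T PG[OF C] i] .
  have Cr: "rmodule C" and Dr: "rmodule D" and Zr: "rmodule Z" using T_rm[OF T] PG C GD Z by auto
  obtain f where f: "mhom C D f" "bij_betw f (mcarrier C) (mcarrier D)" using i unfolding miso_def by blast
  define g where "g = inv_into (mcarrier C) f"
  have sg: "sqmap D C g {mzero D}" unfolding g_def using sq_iso_inv[OF f Cr Dr] .
  have se: "strict_exact G Z D C (\<lambda>_. mzero D) g"
    unfolding strict_exact_def short_exact_def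
  proof (intro conjI)
    show "G Z" "G D" "G C" using PG Z GD C by auto
    show "rmodule Z" "rmodule D" "rmodule C" using Zr Dr Cr by auto
    show "mhom Z D (\<lambda>_. mzero D)" unfolding mhom_def
      using rm_zero[OF Dr] rm_lzero[OF Dr rm_zero[OF Dr]] rm_zero_smult[OF Dr] by simp
    show "mhom D C g" "g ` mcarrier D = mcarrier C" using sg unfolding sqmap_def by auto
    show "inj_on (\<lambda>_. mzero D) (mcarrier Z)" using Z(2) by simp
    show "(\<lambda>_. mzero D) ` mcarrier Z = mkernel D C g"
      using sg Z(2) unfolding sqmap_def mkernel_def by auto
    show "strict_subobject G D ((\<lambda>_. mzero D) ` mcarrier Z)" using strict_zero[OF T GD] Z(2) by simp
  qed
  show ?thesis using P_ext[OF Z(1) C se] .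
qed

lemma P_zero_sub: "rmodule M \<Longrightarrow> P (sub M {mzero M})"
  using P_zero P_iso miso_zero T_rm[OF T] PG by metis

lemma minimal: assumes XP: "\<forall>M. X M \<longrightarrow> P M" and F: "Filt G X M" shows "P M"
proof -
  have M: "G M" using F unfolding Filt_def by blast
  have Mr: "rmodule M" using T_rm[OF T M] .
  obtain k Ms where Ms: "Ms 0 = {mzero M}" "Ms k = mcarrier M"
    "\<forall>i\<le>k. strict_subobject G M (Ms i)" "\<forall>i<k. Ms i \<subseteq> Ms (Suc i)"
    "\<forall>i<k. \<exists>Y S. X Y \<and> strict_subobject G Y S \<and> miso (quot (sub M (Ms (Suc i))) (Ms i)) (quot Y S)"
    using F unfolding Filt_def by blast
  have "i \<le> k \<Longrightarrow> P (sub M (Ms i))" for i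
  proof (induction i)
    case 0 then show ?case using P_zero_sub[OF Mr] Ms(1) by simp
  next
    case (Suc i)
    then have ik: "i < k" by simp
    have PA: "P (sub M (Ms i))" using Suc by simp
    have S0: "strict_subobject G M (Ms i)" and S1: "strict_subobject G M (Ms (Suc i))" using Ms(3) ik by auto
    have inc: "Ms i \<subseteq> Ms (Suc i)" using Ms(4) ik by blast
    define B where "B = sub M (Ms (Suc i))"
    have GB: "G B" unfolding B_def using strict_G[OF T S1] .
    have Br: "rmodule B" using T_rm[OF T GB] .
    have Nsm: "submodule B (Ms i)" unfolding B_def
      using submodule_sub_iff[OF sm_carrier[OF strict_sm[OF T S1]]] inc strict_sm[OF T S0] by blast
    obtain Y S where YS: "X Y" "strict_subobject G Y S" "miso (quot B (Ms i)) (quot Y S)"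
      using Ms(5) ik unfolding B_def by blast
    obtain C where C: "P C" "miso C (quot Y S)" using P_quot[OF _ YS(2)] XP YS(1) unfolding in_class_def by blast
    have Cr: "rmodule C" using T_rm[OF T PG[OF C(1)]] .
    have "miso C (quot B (Ms i))" using miso_trans[OF C(2) miso_sym[OF rmodule_quot[OF Br Nsm] YS(3)]] .
    then obtain g where g: "sqmap B C g (Ms i)" using miso_quot_sq[OF Cr Br Nsm] by blast
    have se: "strict_exact G (sub M (Ms i)) B C (\<lambda>x. x) g"
      unfolding strict_exact_def short_exact_def
    proof (intro conjI)
      show "G (sub M (Ms i))" using strict_G[OF T S0] .
      show "G B" by (rule GB)
      show "G C" using PG[OF C(1)] .
      show "rmodule (sub M (Ms i))" using T_rm[OF T strict_G[OF T S0]] .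
      show "rmodule B" "rmodule C" using Br Cr by auto
      show "mhom (sub M (Ms i)) B (\<lambda>x. x)" unfolding mhom_def B_def using inc by auto
      show "mhom B C g" "g ` mcarrier B = mcarrier C" using g unfolding sqmap_def by auto
      show "inj_on (\<lambda>x. x) (mcarrier (sub M (Ms i)))" by simp
      show "(\<lambda>x. x) ` mcarrier (sub M (Ms i)) = mkernel B C g" using g unfolding sqmap_def mkernel_def by simp
      show "strict_subobject G B ((\<lambda>x. x) ` mcarrier (sub M (Ms i)))"
        unfolding B_def using strict_restrict[OF T S0 _ inc] S1 unfolding strict_subobject_def by simp
    qed
    show ?case using P_ext[OF PA C(1) se] unfolding B_def .
  qed
  then show ?thesis using Ms(2) by (metis order_refl sub_simps(6))
qed

end

end

lemma quot_transfer:
  assumes M: "rmodule M" and Q: "rmodule Q" and p: "sqmap M Q p K" and V: "submodule Q V"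
  shows "miso (quot M {x \<in> mcarrier M. p x \<in> V}) (quot Q V)"
  using first_iso[OF M rmodule_quot[OF Q V] sq_comp[OF p sq_coset[OF Q V]]] .

context
  fixes G X :: "('r::ring_1, 'm) rmod \<Rightarrow> bool"
  assumes T: "torsion_class G" and XG: "\<forall>M. X M \<longrightarrow> G M"
begin

lemma filt_ext:
  assumes se: "strict_exact G A B C f g" and FA: "Filt G X A" and FC: "Filt G X C"
  shows "Filt G X B"
proof -
  have GA: "G A" and GB: "G B" and GC: "G C" and sf: "strict_subobject G B (f ` mcarrier A)"
    and ex: "short_exact A B C f g" using se unfolding strict_exact_def by auto
  have Ar: "rmodule A" and Br: "rmodule B" and Cr: "rmodule C" using T_rm[OF T] GA GB GC by auto
  have hf: "mhom A B f" and hg: "mhom B C g" and inj: "inj_on f (mcarrier A)" and gs: "g ` mcarrier B = mcarrier C"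
    and fk: "f ` mcarrier A = mkernel B C g" using ex unfolding short_exact_def by auto
  obtain ka As where As: "As 0 = {mzero A}" "As ka = mcarrier A"
    "\<forall>i\<le>ka. strict_subobject G A (As i)" "\<forall>i<ka. As i \<subseteq> As (Suc i)"
    "\<forall>i<ka. \<exists>Y S. X Y \<and> strict_subobject G Y S \<and> miso (quot (sub A (As (Suc i))) (As i)) (quot Y S)"
    using FA unfolding Filt_def by blast
  obtain kc Cs where Cs: "Cs 0 = {mzero C}" "Cs kc = mcarrier C"
    "\<forall>i\<le>kc. strict_subobject G C (Cs i)" "\<forall>i<kc. Cs i \<subseteq> Cs (Suc i)"
    "\<forall>i<kc. \<exists>Y S. X Y \<and> strict_subobject G Y S \<and> miso (quot (sub C (Cs (Suc i))) (Cs i)) (quot Y S)"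
    using FC unfolding Filt_def by blast
  define pre where "pre j = {b \<in> mcarrier B. g b \<in> Cs j}" for j
  define Bs where "Bs i = (if i \<le> ka then f ` As i else pre (i - ka))" for i
  have fA: "f ` mcarrier A = pre 0" using fk Cs(1) unfolding pre_def mkernel_def by auto
  have Bs_pre: "ka \<le> i \<Longrightarrow> Bs i = pre (i - ka)" for i
    using fA As(2) unfolding Bs_def by auto
  have sqg: "sqmap B C g (f ` mcarrier A)" unfolding sqmap_def using hg gs fk unfolding mkernel_def by auto
  have Gfa: "G (sub B (f ` mcarrier A))" using strict_G[OF T sf] .
  have fAsm: "submodule B (f ` mcarrier A)" using strict_sm[OF T sf] .
  have hfr: "mhom A (sub B (f ` mcarrier A)) f" using hom_restrict[OF hf, of "mcarrier A" "f ` mcarrier A"] by simp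
  have bfa: "bij_betw f (mcarrier A) (f ` mcarrier A)" using inj by (simp add: bij_betw_def)
  have sqf: "sqmap A (sub B (f ` mcarrier A)) f {mzero A}"
    using sq_iso[OF hfr _ Ar rmodule_sub[OF Br fAsm]] bfa by simp
  have AsC: "i \<le> ka \<Longrightarrow> As i \<subseteq> mcarrier A" for i using As(3) strict_sm[OF T] sm_carrier by blast
  have CsC: "i \<le> kc \<Longrightarrow> Cs i \<subseteq> mcarrier C" for i using Cs(3) strict_sm[OF T] sm_carrier by blast
  have preC: "pre j \<subseteq> mcarrier B" for j unfolding pre_def by auto
  have "Bs 0 = {mzero B} \<and> Bs (ka + kc) = mcarrier B \<and>
        (\<forall>i\<le>ka + kc. strict_subobject G B (Bs i)) \<and> (\<forall>i<ka + kc. Bs i \<subseteq> Bs (Suc i)) \<and>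
        (\<forall>i<ka + kc. \<exists>Y S. X Y \<and> strict_subobject G Y S \<and> miso (quot (sub B (Bs (Suc i))) (Bs i)) (quot Y S))"
  proof (intro conjI allI impI)
    show "Bs 0 = {mzero B}" unfolding Bs_def using As(1) hom_zero[OF Ar Br hf] by simp
    show "Bs (ka + kc) = mcarrier B" using Bs_pre[of "ka + kc"] Cs(2) hom_closed[OF hg] unfolding pre_def by auto
    fix i
    { assume i: "i \<le> ka + kc"
      show "strict_subobject G B (Bs i)"
      proof (cases "i \<le> ka")
        case True
        have "strict_subobject G (sub B (f ` mcarrier A)) (f ` As i)"
          using strict_desc'[OF T GA Gfa sqf G_zero[OF T Ar]] As(3) True by blast
        then show ?thesis using strict_trans[OF T _ sf] True unfolding Bs_def by simp
      next
        case False
        have "strict_subobject G B (pre (i - ka))"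
          unfolding pre_def using strict_pre[OF T GB GC sqg sf] Cs(3) i by simp
        then show ?thesis using Bs_pre False by simp
      qed }
    { assume i: "i < ka + kc"
      show "Bs i \<subseteq> Bs (Suc i)"
      proof (cases "Suc i \<le> ka")
        case True
        then have "As i \<subseteq> As (Suc i)" using As(4) by simp
        then show ?thesis unfolding Bs_def using True by (simp add: image_mono)
      next
        case False
        then have e: "Suc i - ka = Suc (i - ka)" by simp
        have "Bs i = pre (i - ka)" "Bs (Suc i) = pre (Suc (i - ka))" using Bs_pre[of i] Bs_pre[of "Suc i"] False e by auto
        moreover have "Cs (i - ka) \<subseteq> Cs (Suc (i - ka))" using Cs(4) i False by auto
        ultimately show ?thesis unfolding pre_def by auto
      qed }
    { assume i: "i < ka + kc"
      show "\<exists>Y S. X Y \<and> strict_subobject G Y S \<and> miso (quot (sub B (Bs (Suc i))) (Bs i)) (quot Y S)"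
      proof (cases "Suc i \<le> ka")
        case True
        obtain Y S where YS: "X Y" "strict_subobject G Y S" "miso (quot (sub A (As (Suc i))) (As i)) (quot Y S)"
          using As(5)[rule_format, of i] True by auto
        define U where "U = As (Suc i)"
        define V where "V = As i"
        have Usm: "submodule A U" unfolding U_def using As(3) True strict_sm[OF T] by blast
        have UC: "U \<subseteq> mcarrier A" using sm_carrier[OF Usm] .
        have Vsm: "submodule (sub A U) V" unfolding V_def U_def
          using submodule_sub_iff[OF AsC[OF True]] As(3,4) True strict_sm[OF T] by auto
        have fUsm: "submodule B (f ` U)" using hom_image_sm[OF Ar Br hf Usm] .
        have h1: "mhom (sub A U) (sub B (f ` U)) f" using hom_restrict[OF hf UC] by simp
        have b1: "bij_betw f (mcarrier (sub A U)) (mcarrier (sub B (f ` U)))"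
          using inj_on_subset[OF inj UC] by (simp add: bij_betw_def)
        have sq1: "sqmap (sub B (f ` U)) (sub A U) (inv_into U f) {mzero B}"
          using sq_iso_inv[OF h1 b1 rmodule_sub[OF Ar Usm] rmodule_sub[OF Br fUsm]] by simp
        have VU: "V \<subseteq> U" using sm_carrier[OF Vsm] by simp
        have eq: "{x \<in> mcarrier (sub B (f ` U)). inv_into U f x \<in> V} = f ` V"
          using VU inj_on_subset[OF inj UC] by (auto simp: inv_into_f_f)
        have "miso (quot (sub B (f ` U)) (f ` V)) (quot (sub A U) V)"
          using quot_transfer[OF rmodule_sub[OF Br fUsm] rmodule_sub[OF Ar Usm] sq1 Vsm] eq by simp
        then have "miso (quot (sub B (Bs (Suc i))) (Bs i)) (quot Y S)"
          using miso_trans YS(3) True unfolding Bs_def U_def V_def by auto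
        then show ?thesis using YS by blast
      next
        case False
        define j where "j = i - ka"
        have e: "Suc i - ka = Suc j" using False unfolding j_def by simp
        have j: "j < kc" "Bs i = pre j" "Bs (Suc i) = pre (Suc j)" using False i Bs_pre[of i] Bs_pre[of "Suc i"] e unfolding j_def by auto
        obtain Y S where YS: "X Y" "strict_subobject G Y S" "miso (quot (sub C (Cs (Suc j))) (Cs j)) (quot Y S)"
          using Cs(5)[rule_format, of j] j(1) by auto
        have C1sm: "submodule C (Cs (Suc j))" using Cs(3) j(1) strict_sm[OF T] by auto
        have C1C: "Cs (Suc j) \<subseteq> mcarrier C" using sm_carrier[OF C1sm] .
        have Vsm: "submodule (sub C (Cs (Suc j))) (Cs j)"
          using submodule_sub_iff[OF C1C] Cs(3,4) j(1) strict_sm[OF T] by auto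
        have Psm: "submodule B (pre (Suc j))" unfolding pre_def using hom_preimage_sm[OF Br Cr hg C1sm] .
        have h1: "mhom (sub B (pre (Suc j))) (sub C (Cs (Suc j))) g"
          using hom_restrict[OF hg preC] unfolding pre_def by auto
        have s1: "g ` pre (Suc j) = Cs (Suc j)" unfolding pre_def using gs C1C by auto
        have sq1: "sqmap (sub B (pre (Suc j))) (sub C (Cs (Suc j))) g {x \<in> pre (Suc j). g x = mzero C}"
          unfolding sqmap_def using h1 s1 by simp
        have eq: "{x \<in> mcarrier (sub B (pre (Suc j))). g x \<in> Cs j} = pre j"
          using Cs(4) j(1) unfolding pre_def by auto
        have "miso (quot (sub B (pre (Suc j))) (pre j)) (quot (sub C (Cs (Suc j))) (Cs j))"
          using quot_transfer[OF rmodule_sub[OF Br Psm] rmodule_sub[OF Cr C1sm] sq1 Vsm] eq by simp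
        then have "miso (quot (sub B (Bs (Suc i))) (Bs i)) (quot Y S)"
          using miso_trans YS(3) j by auto
        then show ?thesis using YS by blast
      qed }
  qed
  note h = this
  show ?thesis unfolding Filt_def
    by (rule conjI[OF GB], rule exI[of _ "ka + kc"], rule exI[of _ Bs], rule h)
qed

end

context
  fixes G X :: "('r::ring_1, 'm) rmod \<Rightarrow> bool"
  assumes T: "torsion_class G" and XG: "\<forall>M. X M \<longrightarrow> G M"
begin

lemma factor_quot:
  assumes GA: "G A" and GC: "G C" and pi: "sqmap A C \<pi> S" and S: "strict_subobject G A S"
    and S0: "strict_subobject G A M0" and S1: "strict_subobject G A M1" and inc: "M0 \<subseteq> M1"
    and XY: "X Y" and SY: "strict_subobject G Y S0" and phi: "miso (quot (sub A M1) M0) (quot Y S0)"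
  shows "\<exists>Y' S'. X Y' \<and> strict_subobject G Y' S' \<and> miso (quot (sub C (\<pi> ` M1)) (\<pi> ` M0)) (quot Y' S')"
proof -
  have GY: "G Y" using XG XY by blast
  have Ar: "rmodule A" and Cr: "rmodule C" and Yr: "rmodule Y" using T_rm[OF T] GA GC GY by auto
  have hpi: "mhom A C \<pi>" and pis: "\<pi> ` mcarrier A = mcarrier C" and pik: "{x \<in> mcarrier A. \<pi> x = mzero C} = S"
    using pi unfolding sqmap_def by auto
  define A1 where "A1 = sub A M1"
  have M1sm: "submodule A M1" using strict_sm[OF T S1] .
  have M0sm: "submodule A M0" using strict_sm[OF T S0] .
  have M1C: "M1 \<subseteq> mcarrier A" using sm_carrier[OF M1sm] .
  have GA1: "G A1" unfolding A1_def using strict_G[OF T S1] .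
  have A1r: "rmodule A1" using T_rm[OF T GA1] .
  have M0A1: "submodule A1 M0" unfolding A1_def using submodule_sub_iff[OF M1C] inc M0sm by blast
  obtain Qy pY where Qy: "G Qy" "sqmap Y Qy pY S0" "miso Qy (quot Y S0)"
    using quot_copy[OF T GY strict_sm[OF T SY]] by blast
  obtain Q0 p0 where Q0: "G Q0" "sqmap A1 Q0 p0 M0" "miso Q0 (quot A1 M0)"
    using quot_copy[OF T GA1 M0A1] by blast
  have Qyr: "rmodule Qy" and Q0r: "rmodule Q0" using T_rm[OF T] Qy Q0 by auto
  have "miso Qy Q0"
    using miso_trans[OF Qy(3) miso_trans[OF miso_sym[OF rmodule_quot[OF A1r M0A1] phi[folded A1_def]]
          miso_sym[OF Q0r Q0(3)]]] .
  then obtain h where h: "mhom Qy Q0 h" "bij_betw h (mcarrier Qy) (mcarrier Q0)" unfolding miso_def by blast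
  have sqh: "sqmap Qy Q0 h {mzero Qy}" using sq_iso[OF h Qyr Q0r] .
  define C1 where "C1 = sub C (\<pi> ` M1)"
  have pM1: "submodule C (\<pi> ` M1)" using hom_image_sm[OF Ar Cr hpi M1sm] .
  have pM0: "submodule C (\<pi> ` M0)" using hom_image_sm[OF Ar Cr hpi M0sm] .
  have C1r: "rmodule C1" unfolding C1_def using rmodule_sub[OF Cr pM1] .
  have V: "submodule C1 (\<pi> ` M0)" unfolding C1_def
    using submodule_sub_iff[OF sm_carrier[OF pM1]] pM0 inc by blast
  define F0 where "F0 = quot C1 (\<pi> ` M0)"
  have F0r: "rmodule F0" unfolding F0_def using rmodule_quot[OF C1r V] .
  have sq1: "sqmap A1 C1 \<pi> {x \<in> M1. \<pi> x = mzero C}"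
    unfolding sqmap_def A1_def C1_def using hom_restrict[OF hpi M1C] by simp
  define L where "L = {x \<in> M1. \<pi> x \<in> \<pi> ` M0}"
  have squ: "sqmap A1 F0 (\<lambda>x. coset C1 (\<pi> ` M0) (\<pi> x)) L"
    using sq_comp[OF sq1 sq_coset[OF C1r V]] unfolding F0_def L_def A1_def by simp
  have M0L: "M0 \<subseteq> L" unfolding L_def using inc by auto
  obtain \<tau> where tau: "sqmap Q0 F0 \<tau> (p0 ` L)"
    using factor_through[OF A1r Q0r F0r Q0(2) squ M0L] by blast
  have k1: "{y \<in> mcarrier Y. pY y \<in> {mzero Qy}} = S0" using Qy(2) unfolding sqmap_def by auto
  have sq2: "sqmap Y Q0 (\<lambda>y. h (pY y)) S0" using sq_comp[OF Qy(2) sqh] k1 by simp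
  define S' where "S' = {y \<in> mcarrier Y. h (pY y) \<in> p0 ` L}"
  have sq3: "sqmap Y F0 (\<lambda>y. \<tau> (h (pY y))) S'" using sq_comp[OF sq2 tau] unfolding S'_def by simp
  have S'sm: "submodule Y S'" using sq_ker_sm[OF sq3 Yr F0r] .
  have iso: "miso F0 (quot Y S')" using miso_sym[OF rmodule_quot[OF Yr S'sm] first_iso[OF Yr F0r sq3]] .
  have hp0: "mhom A1 Q0 p0" and p0k: "{x \<in> mcarrier A1. p0 x = mzero Q0} = M0" using Q0(2) unfolding sqmap_def by auto
  have Lsm: "submodule A1 L" using sq_ker_sm[OF squ A1r F0r] .
  have GM0: "G (sub A1 M0)" unfolding A1_def using strict_G[OF T S0] by simp
  have TN: "G (sub A1 (L \<inter> N))" if N: "subobject G A1 N" and M0N: "M0 \<subseteq> N" for N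
  proof -
    have NA: "N \<subseteq> M1" and NsA: "subobject G A N" using N subobject_sub_iff[OF T M1sm] unfolding A1_def by auto
    have Nsm: "submodule A N" using NsA unfolding subobject_def by blast
    have Nsm1: "submodule A1 N" using N unfolding subobject_def by blast
    have W: "submodule A1 (L \<inter> N)" using sm_int[OF Lsm Nsm1] .
    have k: "{x \<in> L \<inter> N. p0 x = mzero Q0} = M0" using p0k M0L M0N unfolding A1_def L_def by auto
    have SN1: "submodule A1 (S \<inter> N)" unfolding A1_def
      using submodule_sub_iff[OF M1C] sm_int[OF strict_sm[OF T S] Nsm] NA by blast
    have GSN: "G (sub A1 (S \<inter> N))" unfolding A1_def using strict_int[OF T S NsA] by simp
    have img: "p0 ` (L \<inter> N) = p0 ` (S \<inter> N)"
    proof (rule set_eqI, rule iffI)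
      fix q assume "q \<in> p0 ` (L \<inter> N)"
      then obtain n where n: "n \<in> L" "n \<in> N" "q = p0 n" by blast
      obtain m where m: "m \<in> M0" "\<pi> n = \<pi> m" using n(1) unfolding L_def by blast
      have nA: "n \<in> mcarrier A" and mA: "m \<in> mcarrier A" and n1: "n \<in> M1" and m1: "m \<in> M1"
        using n(1) m(1) inc M1C unfolding L_def by auto
      have dS: "msub A n m \<in> S" using sq_eq_iff[OF pi Ar Cr nA mA] m(2) by simp
      have dN: "msub A n m \<in> N" using sm_sub[OF Nsm n(2)] m(1) M0N by blast
      have "p0 (msub A1 n m) = msub Q0 (p0 n) (p0 m)" using hom_sub[OF hp0] n1 m1 A1r unfolding A1_def by simp
      also have "p0 m = mzero Q0" using p0k m(1) inc unfolding A1_def by auto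
      also have "msub Q0 (p0 n) (mzero Q0) = p0 n" using rm_sub_zero[OF Q0r hom_closed[OF hp0]] n1 unfolding A1_def by simp
      finally have "p0 (msub A n m) = q" using n(3) unfolding A1_def by simp
      then show "q \<in> p0 ` (S \<inter> N)" using dS dN by blast
    next
      fix q assume "q \<in> p0 ` (S \<inter> N)"
      then obtain s where s: "s \<in> S" "s \<in> N" "q = p0 s" by blast
      have "\<pi> s = \<pi> (mzero A)" using s(1) pik hom_zero[OF Ar Cr hpi] by auto
      moreover have "mzero A \<in> M0" using sm_zero[OF M0sm] .
      ultimately have "s \<in> L" unfolding L_def using s(2) NA by blast
      then show "q \<in> p0 ` (L \<inter> N)" using s by blast
    qed
    have "G (sub Q0 (p0 ` (S \<inter> N)))" using G_img_sub[OF T A1r SN1 GSN Q0r hp0] .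
    then show ?thesis using G_ext[OF T A1r W Q0r hp0] k GM0 img by simp
  qed
  have GL: "G (sub A1 L)"
  proof -
    have "subobject G A1 M1" using subobject_top[OF T GA1] unfolding A1_def by simp
    moreover have "L \<inter> M1 = L" unfolding L_def by auto
    ultimately show ?thesis using TN[of M1] inc by simp
  qed
  have sL: "strict_subobject G Q0 (p0 ` L)" using strict_desc[OF T GA1 Q0(1) Q0(2) GM0 Lsm GL TN] by blast
  have "strict_subobject G Y S'" unfolding S'_def using strict_pre[OF T GY Q0(1) sq2 SY sL] .
  then show ?thesis using XY iso unfolding F0_def C1_def by blast
qed

lemma filt_quot:
  assumes FA: "Filt G X A" and S: "strict_subobject G A S"
  shows "in_class (Filt G X) (quot A S)"
proof -
  have GA: "G A" using FA unfolding Filt_def by blast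
  have Ar: "rmodule A" using T_rm[OF T GA] .
  obtain C \<pi> where C: "G C" "sqmap A C \<pi> S" "miso C (quot A S)" using quot_copy[OF T GA strict_sm[OF T S]] by blast
  have Cr: "rmodule C" using T_rm[OF T C(1)] .
  have hpi: "mhom A C \<pi>" and pis: "\<pi> ` mcarrier A = mcarrier C" using C(2) unfolding sqmap_def by auto
  obtain k Ms where Ms: "Ms 0 = {mzero A}" "Ms k = mcarrier A"
    "\<forall>i\<le>k. strict_subobject G A (Ms i)" "\<forall>i<k. Ms i \<subseteq> Ms (Suc i)"
    "\<forall>i<k. \<exists>Y S. X Y \<and> strict_subobject G Y S \<and> miso (quot (sub A (Ms (Suc i))) (Ms i)) (quot Y S)"
    using FA unfolding Filt_def by blast
  define Cs where "Cs i = \<pi> ` Ms i" for i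
  have "Cs 0 = {mzero C} \<and> Cs k = mcarrier C \<and>
        (\<forall>i\<le>k. strict_subobject G C (Cs i)) \<and> (\<forall>i<k. Cs i \<subseteq> Cs (Suc i)) \<and>
        (\<forall>i<k. \<exists>Y S. X Y \<and> strict_subobject G Y S \<and> miso (quot (sub C (Cs (Suc i))) (Cs i)) (quot Y S))"
  proof (intro conjI allI impI)
    show "Cs 0 = {mzero C}" unfolding Cs_def using Ms(1) hom_zero[OF Ar Cr hpi] by simp
    show "Cs k = mcarrier C" unfolding Cs_def using Ms(2) pis by simp
    fix i
    { assume "i \<le> k" then show "strict_subobject G C (Cs i)" unfolding Cs_def
        using strict_desc'[OF T GA C(1) C(2) strict_G[OF T S]] Ms(3) by blast }
    { assume "i < k" then show "Cs i \<subseteq> Cs (Suc i)" unfolding Cs_def using Ms(4) by (simp add: image_mono) }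
    { assume i: "i < k"
      obtain Y S0 where YS: "X Y" "strict_subobject G Y S0" "miso (quot (sub A (Ms (Suc i))) (Ms i)) (quot Y S0)"
        using Ms(5)[rule_format, of i] i by auto
      show "\<exists>Y S. X Y \<and> strict_subobject G Y S \<and> miso (quot (sub C (Cs (Suc i))) (Cs i)) (quot Y S)"
        unfolding Cs_def using factor_quot[OF GA C(1) C(2) S _ _ _ YS] Ms(3,4) i by simp }
  qed
  note h = this
  have "Filt G X C" unfolding Filt_def
    by (rule conjI[OF C(1)], rule exI[of _ k], rule exI[of _ Cs], rule h)
  then show ?thesis unfolding in_class_def using C(3) by blast
qed

end

theorem mainTheorem10:
  fixes alg :: "'k::field \<Rightarrow> 'r::ring_1"
    and G X :: "('r, 'm) rmod \<Rightarrow> bool"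
  assumes "fin_dim_algebra alg"
    and "torsion_class G"
    and "\<forall>M. X M \<longrightarrow> G M"
  shows "pseudo_torsion_class G (Filt G X) \<and>
         (\<forall>M. X M \<longrightarrow> Filt G X M) \<and>
         (\<forall>P. pseudo_torsion_class G P \<and> (\<forall>M. X M \<longrightarrow> P M) \<longrightarrow> (\<forall>M. Filt G X M \<longrightarrow> P M))"
proof (intro conjI allI impI)
  have T: "torsion_class G" and XG: "\<forall>M. X M \<longrightarrow> G M" using assms by auto
  show "pseudo_torsion_class G (Filt G X)" unfolding pseudo_torsion_class_def
  proof (intro conjI allI impI)
    fix M assume "Filt G X M" then show "G M" unfolding Filt_def by blast
  next
    show "\<exists>M. Filt G X M" using filt_ne[OF T XG] .
  next
    fix A S assume "Filt G X A \<and> strict_subobject G A S"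
    then show "in_class (Filt G X) (quot A S)" using filt_quot[OF T XG] by blast
  next
    fix A B C f g assume "Filt G X A \<and> Filt G X C \<and> strict_exact G A B C f g"
    then show "Filt G X B" using filt_ext[OF T XG] by blast
  qed
  fix M
  { assume "X M" then show "Filt G X M" using filt_X[OF T XG] by blast }
  fix P assume "pseudo_torsion_class G P \<and> (\<forall>M. X M \<longrightarrow> P M)" and "Filt G X M"
  then show "P M" using minimal[OF T XG] by blast
qed

end
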